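(* Let $(a,b,c,d)\in\mathbb{C}^4\setminus\{0\}$ and $f=G_{a,b,c,d}$. Then the following are equivalent: (i) $f$ is reducible; (ii) either $a^2=b^2=c^2=d^2$, or at least three of $a,b,c,d$ are zero; (iii) the point $[f]\in\mathbb{P}(V)$ lies in the $\Gamma$-orbit of $[(x_1x_2-y_1y_2)(x_3x_4-y_3y_4)]$ (note that $G_{0,0,0,1}=\frac12(x_1x_2-y_1y_2)(x_3x_4-y_3y_4)$).
   Context: Let $(\mathbb{P}^1)^4$ have bihomogeneous coordinates $((x_1:y_1),(x_2:y_2),(x_3:y_3),(x_4:y_4))$, and $V=H^0((\mathbb{P}^1)^4,\mathcal{O}(1,1,1,1))$. For $(a,b,c,d)\in\mathbb{C}^4$ put $$G_{a,b,c,d}=\tfrac{a+d}{2}(x_1x_2x_3x_4+y_1y_2y_3y_4)+\tfrac{a-d}{2}(x_1x_2y_3y_4+y_1y_2x_3x_4)+\tfrac{b+c}{2}(x_1y_2x_3y_4+y_1x_2y_3x_4)+\tfrac{b-c}{2}(x_1y_2y_3x_4+y_1x_2x_3y_4).$$ $\Gamma=\mathrm{SL}_2(\mathbb{C})^4\rtimes\mathfrak{S}_4$ acts on $V$ and $\mathbb{P}(V)$, the $i$-th factor $\mathrm{SL}_2(\mathbb{C})$ acting linearly on $(x_i,y_i)$ and $\mathfrak{S}_4$ permuting the four factors of $(\mathbb{P}^1)^4$. *)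

theory Defs
  imports "HOL-Computational_Algebra.Computational_Algebra" "HOL-Combinatorics.Permutations"
begin

text \<open>The polynomial ring C[x1,y1,x2,y2,x3,y3,x4,y4] as an iterated univariate
  polynomial ring. Level k (k = 0..7) carries the variable number k;
  variable 2i is x_(i+1), variable 2i+1 is y_(i+1).\<close>

type_synonym P1 = "complex poly"
type_synonym P2 = "P1 poly"
type_synonym P3 = "P2 poly"
type_synonym P4 = "P3 poly"
type_synonym P5 = "P4 poly"
type_synonym P6 = "P5 poly"
type_synonym P7 = "P6 poly"
type_synonym P8 = "P7 poly"

definition L8 :: "complex \<Rightarrow> P8" where
  "L8 c = [:[:[:[:[:[:[:[:c:]:]:]:]:]:]:]:]"

definition var :: "nat \<Rightarrow> P8" where
  "var k = (if k = 0 then [:[:[:[:[:[:[:([:0,1:]::P1):]:]:]:]:]:]:]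
       else if k = 1 then [:[:[:[:[:[:([:0,1:]::P2):]:]:]:]:]:]
       else if k = 2 then [:[:[:[:[:([:0,1:]::P3):]:]:]:]:]
       else if k = 3 then [:[:[:[:([:0,1:]::P4):]:]:]:]
       else if k = 4 then [:[:[:([:0,1:]::P5):]:]:]
       else if k = 5 then [:[:([:0,1:]::P6):]:]
       else if k = 6 then [:([:0,1:]::P7):]
       else ([:0,1:]::P8))"

definition X :: "nat \<Rightarrow> P8" where "X i = var (2*i)"
definition Y :: "nat \<Rightarrow> P8" where "Y i = var (2*i+1)"

definition eval1 :: "P1 \<Rightarrow> (nat \<Rightarrow> P8) \<Rightarrow> P8" where
  "eval1 p s = poly (map_poly L8 p) (s 0)"
definition eval2 :: "P2 \<Rightarrow> (nat \<Rightarrow> P8) \<Rightarrow> P8" where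
  "eval2 p s = poly (map_poly (\<lambda>q. eval1 q s) p) (s 1)"
definition eval3 :: "P3 \<Rightarrow> (nat \<Rightarrow> P8) \<Rightarrow> P8" where
  "eval3 p s = poly (map_poly (\<lambda>q. eval2 q s) p) (s 2)"
definition eval4 :: "P4 \<Rightarrow> (nat \<Rightarrow> P8) \<Rightarrow> P8" where
  "eval4 p s = poly (map_poly (\<lambda>q. eval3 q s) p) (s 3)"
definition eval5 :: "P5 \<Rightarrow> (nat \<Rightarrow> P8) \<Rightarrow> P8" where
  "eval5 p s = poly (map_poly (\<lambda>q. eval4 q s) p) (s 4)"
definition eval6 :: "P6 \<Rightarrow> (nat \<Rightarrow> P8) \<Rightarrow> P8" where
  "eval6 p s = poly (map_poly (\<lambda>q. eval5 q s) p) (s 5)"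
definition eval7 :: "P7 \<Rightarrow> (nat \<Rightarrow> P8) \<Rightarrow> P8" where
  "eval7 p s = poly (map_poly (\<lambda>q. eval6 q s) p) (s 6)"
definition eval8 :: "P8 \<Rightarrow> (nat \<Rightarrow> P8) \<Rightarrow> P8" where
  "eval8 p s = poly (map_poly (\<lambda>q. eval7 q s) p) (s 7)"

definition G :: "complex \<Rightarrow> complex \<Rightarrow> complex \<Rightarrow> complex \<Rightarrow> P8" where
  "G a b c d =
     L8 ((a+d)/2) * (X 0 * X 1 * X 2 * X 3 + Y 0 * Y 1 * Y 2 * Y 3)
   + L8 ((a-d)/2) * (X 0 * X 1 * Y 2 * Y 3 + Y 0 * Y 1 * X 2 * X 3)
   + L8 ((b+c)/2) * (X 0 * Y 1 * X 2 * Y 3 + Y 0 * X 1 * Y 2 * X 3)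
   + L8 ((b-c)/2) * (X 0 * Y 1 * Y 2 * X 3 + Y 0 * X 1 * X 2 * Y 3)"

text \<open>Action of an element of Gamma = SL2(C)^4 x| S4 on polynomials:
  the i-th factor is the matrix ((al i, be i),(ga i, de i)) of determinant 1,
  acting linearly on (x_i, y_i), and the permutation sg of {0..3} permutes the factors.\<close>
definition Gamma_subst ::
  "(nat \<Rightarrow> complex) \<Rightarrow> (nat \<Rightarrow> complex) \<Rightarrow> (nat \<Rightarrow> complex) \<Rightarrow> (nat \<Rightarrow> complex)
   \<Rightarrow> (nat \<Rightarrow> nat) \<Rightarrow> nat \<Rightarrow> P8" where
  "Gamma_subst al be ga de sg k =
     (let i = k div 2 in
      if even k then L8 (al i) * X (sg i) + L8 (be i) * Y (sg i)
      else L8 (ga i) * X (sg i) + L8 (de i) * Y (sg i))"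

definition in_Gamma :: "(nat \<Rightarrow> complex) \<Rightarrow> (nat \<Rightarrow> complex) \<Rightarrow> (nat \<Rightarrow> complex)
   \<Rightarrow> (nat \<Rightarrow> complex) \<Rightarrow> (nat \<Rightarrow> nat) \<Rightarrow> bool" where
  "in_Gamma al be ga de sg \<longleftrightarrow>
     (\<forall>i<4. al i * de i - be i * ga i = 1) \<and> sg permutes {0..<4}"

definition in_Gamma_orbit_proj :: "P8 \<Rightarrow> P8 \<Rightarrow> bool" where
  "in_Gamma_orbit_proj f h \<longleftrightarrow>
     (\<exists>al be ga de sg lam. in_Gamma al be ga de sg \<and> lam \<noteq> 0 \<and>
        f = L8 lam * eval8 h (Gamma_subst al be ga de sg))"

definition reducible :: "P8 \<Rightarrow> bool" where
  "reducible f \<longleftrightarrow> f \<noteq> 0 \<and> \<not> is_unit f \<and> \<not> irreducible f"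

end

theory Submission
  imports Defs
begin

definition rh :: "('a::comm_ring_1 \<Rightarrow> 'b::comm_ring_1) \<Rightarrow> bool" where
  "rh f \<longleftrightarrow> f 0 = 0 \<and> f 1 = 1 \<and> (\<forall>x y. f (x+y) = f x + f y) \<and> (\<forall>x y. f (x*y) = f x * f y)"

lemma rh_0: "rh f \<Longrightarrow> f 0 = 0" and rh_1: "rh f \<Longrightarrow> f 1 = 1"
  and rh_add: "rh f \<Longrightarrow> f (x+y) = f x + f y" and rh_mult: "rh f \<Longrightarrow> f (x*y) = f x * f y"
  by (auto simp: rh_def)

lemma rh_uminus: "rh f \<Longrightarrow> f (-x) = - f x"
proof -
  assume h: "rh f"
  have "f (-x) + f x = 0" using rh_add[OF h, of "-x" x] rh_0[OF h] by simp
  thus ?thesis by (simp add: eq_neg_iff_add_eq_0)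
qed

lemma rh_diff: "rh f \<Longrightarrow> f (x-y) = f x - f y"
  using rh_add[of f x "-y"] rh_uminus[of f y] by simp

lemma rh_sum: "rh f \<Longrightarrow> f (sum g A) = (\<Sum>i\<in>A. f (g i))"
  by (induction A rule: infinite_finite_induct) (auto simp: rh_0 rh_add)

lemma map_poly_add_rh: "rh f \<Longrightarrow> map_poly f (p+q) = map_poly f p + map_poly f q"
  by (intro poly_eqI) (simp add: coeff_map_poly rh_0 rh_add)

lemma map_poly_mult_rh: "rh f \<Longrightarrow> map_poly f (p*q) = map_poly f p * map_poly f q"
  by (intro poly_eqI) (simp add: coeff_map_poly rh_0 rh_mult coeff_mult rh_sum)

lemma rh_poly: "rh f \<Longrightarrow> rh (\<lambda>p. poly (map_poly f p) x)"
  unfolding rh_def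
  by (simp add: map_poly_add_rh map_poly_mult_rh rh_0 rh_1 rh_def[symmetric])

lemma rh_comp_poly: "rh H \<Longrightarrow> f 0 = 0 \<Longrightarrow> H (poly (map_poly f p) x) = poly (map_poly (H \<circ> f) p) (H x)"
  by (induction p) (auto simp: map_poly_pCons rh_0 rh_add rh_mult)

definition lift :: "('a::comm_ring_1 \<Rightarrow> (nat \<Rightarrow> 'r::comm_ring_1) \<Rightarrow> 'r) \<Rightarrow> nat \<Rightarrow> 'a poly \<Rightarrow> (nat \<Rightarrow> 'r) \<Rightarrow> 'r" where
  "lift E n p w = poly (map_poly (\<lambda>q. E q w) p) (w n)"

lemma lift_rh: "(\<And>w. rh (\<lambda>q. E q w)) \<Longrightarrow> rh (\<lambda>p. lift E n p w)"
  unfolding lift_def by (rule rh_poly) auto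

lemma lift_dep:
  assumes "\<And>q w w'. (\<forall>j<n. w j = w' j) \<Longrightarrow> E q w = E q w'" "\<forall>j<Suc n. w j = w' j"
  shows "lift E n p w = lift E n p w'"
proof -
  have "(\<lambda>q. E q w) = (\<lambda>q. E q w')" using assms by auto
  moreover have "w n = w' n" using assms by auto
  ultimately show ?thesis unfolding lift_def by simp
qed

lemma lift_const: "E 0 w = 0 \<Longrightarrow> lift E n [:q:] w = E q w"
  unfolding lift_def by (simp add: map_poly_pCons)

lemma lift_var: "E 0 w = 0 \<Longrightarrow> E 1 w = 1 \<Longrightarrow> lift E n [:0,1:] w = w n"
  unfolding lift_def by (simp add: map_poly_pCons)

lemma lift_comp:
  assumes "rh H" "E 0 w = 0" "\<And>q. H (E q w) = E' q (\<lambda>j. H (w j))"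
  shows "H (lift E n p w) = lift E' n p (\<lambda>j. H (w j))"
  unfolding lift_def using rh_comp_poly[OF assms(1), of "\<lambda>q. E q w"] assms by (simp add: o_def)

lemma lift_inj:
  fixes E :: "'a::comm_ring_1 \<Rightarrow> (nat \<Rightarrow> complex) \<Rightarrow> complex"
  assumes hom: "\<And>w. rh (\<lambda>q. E q w)"
    and dep: "\<And>q w w'. (\<forall>j<n. w j = w' j) \<Longrightarrow> E q w = E q w'"
    and inj: "\<And>q. (\<forall>w. E q w = 0) \<Longrightarrow> q = 0"
    and z: "\<forall>w. lift E n p w = 0"
  shows "p = 0"
proof -
  have "E (coeff p i) w = 0" for i w
  proof -
    have "poly (map_poly (\<lambda>q. E q w) p) t = 0" for t
    proof -
      have "lift E n p (w(n:=t)) = 0" using z by auto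
      moreover have "(\<lambda>q. E q (w(n:=t))) = (\<lambda>q. E q w)" using dep by auto
      ultimately show ?thesis unfolding lift_def by simp
    qed
    hence "map_poly (\<lambda>q. E q w) p = 0" using poly_all_0_iff_0 by blast
    hence "coeff (map_poly (\<lambda>q. E q w) p) i = 0" by simp
    thus ?thesis using rh_0[OF hom] by (simp add: coeff_map_poly)
  qed
  hence "coeff p i = 0" for i using inj by auto
  thus ?thesis by (simp add: poly_eq_iff)
qed

definition ge1 :: "(complex \<Rightarrow> 'r::comm_ring_1) \<Rightarrow> P1 \<Rightarrow> (nat \<Rightarrow> 'r) \<Rightarrow> 'r" where "ge1 \<phi> = lift (\<lambda>c w. \<phi> c) 0"

definition ge2 :: "(complex \<Rightarrow> 'r::comm_ring_1) \<Rightarrow> P2 \<Rightarrow> (nat \<Rightarrow> 'r) \<Rightarrow> 'r" where "ge2 \<phi> = lift (ge1 \<phi>) 1"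

definition ge3 :: "(complex \<Rightarrow> 'r::comm_ring_1) \<Rightarrow> P3 \<Rightarrow> (nat \<Rightarrow> 'r) \<Rightarrow> 'r" where "ge3 \<phi> = lift (ge2 \<phi>) 2"

definition ge4 :: "(complex \<Rightarrow> 'r::comm_ring_1) \<Rightarrow> P4 \<Rightarrow> (nat \<Rightarrow> 'r) \<Rightarrow> 'r" where "ge4 \<phi> = lift (ge3 \<phi>) 3"

definition ge5 :: "(complex \<Rightarrow> 'r::comm_ring_1) \<Rightarrow> P5 \<Rightarrow> (nat \<Rightarrow> 'r) \<Rightarrow> 'r" where "ge5 \<phi> = lift (ge4 \<phi>) 4"

definition ge6 :: "(complex \<Rightarrow> 'r::comm_ring_1) \<Rightarrow> P6 \<Rightarrow> (nat \<Rightarrow> 'r) \<Rightarrow> 'r" where "ge6 \<phi> = lift (ge5 \<phi>) 5"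

definition ge7 :: "(complex \<Rightarrow> 'r::comm_ring_1) \<Rightarrow> P7 \<Rightarrow> (nat \<Rightarrow> 'r) \<Rightarrow> 'r" where "ge7 \<phi> = lift (ge6 \<phi>) 6"

definition ge8 :: "(complex \<Rightarrow> 'r::comm_ring_1) \<Rightarrow> P8 \<Rightarrow> (nat \<Rightarrow> 'r) \<Rightarrow> 'r" where "ge8 \<phi> = lift (ge7 \<phi>) 7"

lemma ge1_rh: "rh \<phi> \<Longrightarrow> rh (\<lambda>p. ge1 \<phi> p w)" unfolding ge1_def by (rule lift_rh) simp

lemma ge2_rh: "rh \<phi> \<Longrightarrow> rh (\<lambda>p. ge2 \<phi> p w)" unfolding ge2_def by (rule lift_rh) (rule ge1_rh)

lemma ge3_rh: "rh \<phi> \<Longrightarrow> rh (\<lambda>p. ge3 \<phi> p w)" unfolding ge3_def by (rule lift_rh) (rule ge2_rh)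

lemma ge4_rh: "rh \<phi> \<Longrightarrow> rh (\<lambda>p. ge4 \<phi> p w)" unfolding ge4_def by (rule lift_rh) (rule ge3_rh)

lemma ge5_rh: "rh \<phi> \<Longrightarrow> rh (\<lambda>p. ge5 \<phi> p w)" unfolding ge5_def by (rule lift_rh) (rule ge4_rh)

lemma ge6_rh: "rh \<phi> \<Longrightarrow> rh (\<lambda>p. ge6 \<phi> p w)" unfolding ge6_def by (rule lift_rh) (rule ge5_rh)

lemma ge7_rh: "rh \<phi> \<Longrightarrow> rh (\<lambda>p. ge7 \<phi> p w)" unfolding ge7_def by (rule lift_rh) (rule ge6_rh)

lemma ge8_rh: "rh \<phi> \<Longrightarrow> rh (\<lambda>p. ge8 \<phi> p w)" unfolding ge8_def by (rule lift_rh) (rule ge7_rh)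

lemma ge1_dep: "\<forall>j<1. w j = w' j \<Longrightarrow> ge1 \<phi> p w = ge1 \<phi> p w'" unfolding ge1_def by (rule lift_dep) auto

lemma ge2_dep: "\<forall>j<2. w j = w' j \<Longrightarrow> ge2 \<phi> p w = ge2 \<phi> p w'" unfolding ge2_def by (rule lift_dep) (auto intro: ge1_dep)

lemma ge3_dep: "\<forall>j<3. w j = w' j \<Longrightarrow> ge3 \<phi> p w = ge3 \<phi> p w'" unfolding ge3_def by (rule lift_dep) (auto intro: ge2_dep)

lemma ge4_dep: "\<forall>j<4. w j = w' j \<Longrightarrow> ge4 \<phi> p w = ge4 \<phi> p w'" unfolding ge4_def by (rule lift_dep) (auto intro: ge3_dep)

lemma ge5_dep: "\<forall>j<5. w j = w' j \<Longrightarrow> ge5 \<phi> p w = ge5 \<phi> p w'" unfolding ge5_def by (rule lift_dep) (auto intro: ge4_dep)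

lemma ge6_dep: "\<forall>j<6. w j = w' j \<Longrightarrow> ge6 \<phi> p w = ge6 \<phi> p w'" unfolding ge6_def by (rule lift_dep) (auto intro: ge5_dep)

lemma ge7_dep: "\<forall>j<7. w j = w' j \<Longrightarrow> ge7 \<phi> p w = ge7 \<phi> p w'" unfolding ge7_def by (rule lift_dep) (auto intro: ge6_dep)

lemma ge8_dep: "\<forall>j<8. w j = w' j \<Longrightarrow> ge8 \<phi> p w = ge8 \<phi> p w'" unfolding ge8_def by (rule lift_dep) (auto intro: ge7_dep)

lemma ge2_const: "rh \<phi> \<Longrightarrow> ge2 \<phi> [:q:] w = ge1 \<phi> q w" unfolding ge2_def by (rule lift_const) (rule rh_0[OF ge1_rh])

lemma ge3_const: "rh \<phi> \<Longrightarrow> ge3 \<phi> [:q:] w = ge2 \<phi> q w" unfolding ge3_def by (rule lift_const) (rule rh_0[OF ge2_rh])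

lemma ge4_const: "rh \<phi> \<Longrightarrow> ge4 \<phi> [:q:] w = ge3 \<phi> q w" unfolding ge4_def by (rule lift_const) (rule rh_0[OF ge3_rh])

lemma ge5_const: "rh \<phi> \<Longrightarrow> ge5 \<phi> [:q:] w = ge4 \<phi> q w" unfolding ge5_def by (rule lift_const) (rule rh_0[OF ge4_rh])

lemma ge6_const: "rh \<phi> \<Longrightarrow> ge6 \<phi> [:q:] w = ge5 \<phi> q w" unfolding ge6_def by (rule lift_const) (rule rh_0[OF ge5_rh])

lemma ge7_const: "rh \<phi> \<Longrightarrow> ge7 \<phi> [:q:] w = ge6 \<phi> q w" unfolding ge7_def by (rule lift_const) (rule rh_0[OF ge6_rh])

lemma ge8_const: "rh \<phi> \<Longrightarrow> ge8 \<phi> [:q:] w = ge7 \<phi> q w" unfolding ge8_def by (rule lift_const) (rule rh_0[OF ge7_rh])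

lemma ge1_const: "rh \<phi> \<Longrightarrow> ge1 \<phi> [:q:] w = \<phi> q" unfolding ge1_def by (rule lift_const) (simp add: rh_0)

lemma ge1_var: "rh \<phi> \<Longrightarrow> ge1 \<phi> [:0,1:] w = w 0" unfolding ge1_def by (rule lift_var) (simp_all add: rh_0 rh_1)

lemma ge2_var: "rh \<phi> \<Longrightarrow> ge2 \<phi> [:0,1:] w = w 1" unfolding ge2_def by (rule lift_var) (simp_all add: rh_0[OF ge1_rh] rh_1[OF ge1_rh])

lemma ge3_var: "rh \<phi> \<Longrightarrow> ge3 \<phi> [:0,1:] w = w 2" unfolding ge3_def by (rule lift_var) (simp_all add: rh_0[OF ge2_rh] rh_1[OF ge2_rh])

lemma ge4_var: "rh \<phi> \<Longrightarrow> ge4 \<phi> [:0,1:] w = w 3" unfolding ge4_def by (rule lift_var) (simp_all add: rh_0[OF ge3_rh] rh_1[OF ge3_rh])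

lemma ge5_var: "rh \<phi> \<Longrightarrow> ge5 \<phi> [:0,1:] w = w 4" unfolding ge5_def by (rule lift_var) (simp_all add: rh_0[OF ge4_rh] rh_1[OF ge4_rh])

lemma ge6_var: "rh \<phi> \<Longrightarrow> ge6 \<phi> [:0,1:] w = w 5" unfolding ge6_def by (rule lift_var) (simp_all add: rh_0[OF ge5_rh] rh_1[OF ge5_rh])

lemma ge7_var: "rh \<phi> \<Longrightarrow> ge7 \<phi> [:0,1:] w = w 6" unfolding ge7_def by (rule lift_var) (simp_all add: rh_0[OF ge6_rh] rh_1[OF ge6_rh])

lemma ge8_var: "rh \<phi> \<Longrightarrow> ge8 \<phi> [:0,1:] w = w 7" unfolding ge8_def by (rule lift_var) (simp_all add: rh_0[OF ge7_rh] rh_1[OF ge7_rh])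

lemma ge1_comp: "rh H \<Longrightarrow> rh \<phi> \<Longrightarrow> H (ge1 \<phi> p w) = ge1 (\<lambda>c. H (\<phi> c)) p (\<lambda>j. H (w j))" unfolding ge1_def by (rule lift_comp) (simp_all add: rh_0)

lemma ge2_comp: "rh H \<Longrightarrow> rh \<phi> \<Longrightarrow> H (ge2 \<phi> p w) = ge2 (\<lambda>c. H (\<phi> c)) p (\<lambda>j. H (w j))" unfolding ge2_def by (rule lift_comp) (simp_all add: rh_0[OF ge1_rh] ge1_comp)

lemma ge3_comp: "rh H \<Longrightarrow> rh \<phi> \<Longrightarrow> H (ge3 \<phi> p w) = ge3 (\<lambda>c. H (\<phi> c)) p (\<lambda>j. H (w j))" unfolding ge3_def by (rule lift_comp) (simp_all add: rh_0[OF ge2_rh] ge2_comp)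

lemma ge4_comp: "rh H \<Longrightarrow> rh \<phi> \<Longrightarrow> H (ge4 \<phi> p w) = ge4 (\<lambda>c. H (\<phi> c)) p (\<lambda>j. H (w j))" unfolding ge4_def by (rule lift_comp) (simp_all add: rh_0[OF ge3_rh] ge3_comp)

lemma ge5_comp: "rh H \<Longrightarrow> rh \<phi> \<Longrightarrow> H (ge5 \<phi> p w) = ge5 (\<lambda>c. H (\<phi> c)) p (\<lambda>j. H (w j))" unfolding ge5_def by (rule lift_comp) (simp_all add: rh_0[OF ge4_rh] ge4_comp)

lemma ge6_comp: "rh H \<Longrightarrow> rh \<phi> \<Longrightarrow> H (ge6 \<phi> p w) = ge6 (\<lambda>c. H (\<phi> c)) p (\<lambda>j. H (w j))" unfolding ge6_def by (rule lift_comp) (simp_all add: rh_0[OF ge5_rh] ge5_comp)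

lemma ge7_comp: "rh H \<Longrightarrow> rh \<phi> \<Longrightarrow> H (ge7 \<phi> p w) = ge7 (\<lambda>c. H (\<phi> c)) p (\<lambda>j. H (w j))" unfolding ge7_def by (rule lift_comp) (simp_all add: rh_0[OF ge6_rh] ge6_comp)

lemma ge8_comp: "rh H \<Longrightarrow> rh \<phi> \<Longrightarrow> H (ge8 \<phi> p w) = ge8 (\<lambda>c. H (\<phi> c)) p (\<lambda>j. H (w j))" unfolding ge8_def by (rule lift_comp) (simp_all add: rh_0[OF ge7_rh] ge7_comp)

lemma rh_id: "rh (\<lambda>c. c)" by (simp add: rh_def)

lemma ge1_inj: "\<forall>w. ge1 (\<lambda>c::complex. c) p w = 0 \<Longrightarrow> p = 0" unfolding ge1_def by (rule lift_inj[where n=0]) (auto simp: rh_id)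

lemma ge2_inj: "\<forall>w. ge2 (\<lambda>c::complex. c) p w = 0 \<Longrightarrow> p = 0" unfolding ge2_def by (rule lift_inj[where n=1]) (auto simp: ge1_rh rh_id intro: ge1_dep ge1_inj)

lemma ge3_inj: "\<forall>w. ge3 (\<lambda>c::complex. c) p w = 0 \<Longrightarrow> p = 0" unfolding ge3_def by (rule lift_inj[where n=2]) (auto simp: ge2_rh rh_id intro: ge2_dep ge2_inj)

lemma ge4_inj: "\<forall>w. ge4 (\<lambda>c::complex. c) p w = 0 \<Longrightarrow> p = 0" unfolding ge4_def by (rule lift_inj[where n=3]) (auto simp: ge3_rh rh_id intro: ge3_dep ge3_inj)

lemma ge5_inj: "\<forall>w. ge5 (\<lambda>c::complex. c) p w = 0 \<Longrightarrow> p = 0" unfolding ge5_def by (rule lift_inj[where n=4]) (auto simp: ge4_rh rh_id intro: ge4_dep ge4_inj)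

lemma ge6_inj: "\<forall>w. ge6 (\<lambda>c::complex. c) p w = 0 \<Longrightarrow> p = 0" unfolding ge6_def by (rule lift_inj[where n=5]) (auto simp: ge5_rh rh_id intro: ge5_dep ge5_inj)

lemma ge7_inj: "\<forall>w. ge7 (\<lambda>c::complex. c) p w = 0 \<Longrightarrow> p = 0" unfolding ge7_def by (rule lift_inj[where n=6]) (auto simp: ge6_rh rh_id intro: ge6_dep ge6_inj)

lemma ge8_inj: "\<forall>w. ge8 (\<lambda>c::complex. c) p w = 0 \<Longrightarrow> p = 0" unfolding ge8_def by (rule lift_inj[where n=7]) (auto simp: ge7_rh rh_id intro: ge7_dep ge7_inj)



lemma rh_pC: "rh (\<lambda>c::'a::comm_ring_1. [:c:])"
  by (simp add: rh_def)

lemma rh_L8: "rh L8"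
  unfolding rh_def L8_def by (simp add: one_pCons[symmetric])

lemma eval8_ge: "eval8 p s = ge8 L8 p s"
proof -
  have 1: "eval1 q s = ge1 L8 q s" for q unfolding eval1_def ge1_def lift_def by simp
  have 2: "eval2 q s = ge2 L8 q s" for q unfolding eval2_def ge2_def lift_def by (simp add: 1[abs_def] flip: lift_def)
  have 3: "eval3 q s = ge3 L8 q s" for q unfolding eval3_def ge3_def lift_def by (simp add: 2[abs_def] flip: lift_def)
  have 4: "eval4 q s = ge4 L8 q s" for q unfolding eval4_def ge4_def lift_def by (simp add: 3[abs_def] flip: lift_def)
  have 5: "eval5 q s = ge5 L8 q s" for q unfolding eval5_def ge5_def lift_def by (simp add: 4[abs_def] flip: lift_def)
  have 6: "eval6 q s = ge6 L8 q s" for q unfolding eval6_def ge6_def lift_def by (simp add: 5[abs_def] flip: lift_def)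
  have 7: "eval7 q s = ge7 L8 q s" for q unfolding eval7_def ge7_def lift_def by (simp add: 6[abs_def] flip: lift_def)
  show ?thesis unfolding eval8_def ge8_def lift_def by (simp add: 7[abs_def] flip: lift_def)
qed

definition ev :: "(nat \<Rightarrow> complex) \<Rightarrow> P8 \<Rightarrow> complex" where
  "ev z p = ge8 (\<lambda>c. c) p z"

lemma ev_rh: "rh (ev z)"
  unfolding ev_def using ge8_rh[OF rh_id] by simp

lemma ev_add[simp]: "ev z (p+q) = ev z p + ev z q" and ev_mult[simp]: "ev z (p*q) = ev z p * ev z q"
  and ev_diff[simp]: "ev z (p-q) = ev z p - ev z q" and ev_0[simp]: "ev z 0 = 0" and ev_1[simp]: "ev z 1 = 1"
  using rh_add[OF ev_rh] rh_mult[OF ev_rh] rh_diff[OF ev_rh] rh_0[OF ev_rh] rh_1[OF ev_rh] by auto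

lemma ev_L8[simp]: "ev z (L8 c) = c"
  unfolding ev_def L8_def by (simp add: ge8_const ge7_const ge6_const ge5_const ge4_const ge3_const ge2_const ge1_const rh_id)

lemma ev_var: "k < 8 \<Longrightarrow> ev z (var k) = z k"
  unfolding ev_def var_def
  using less_Suc_eq[of k 7] 
  by (auto simp: ge8_const ge7_const ge6_const ge5_const ge4_const ge3_const ge2_const ge1_const rh_id
      ge8_var ge7_var ge6_var ge5_var ge4_var ge3_var ge2_var ge1_var)

lemma ev_X[simp]: "i < 4 \<Longrightarrow> ev z (X i) = z (2*i)" and ev_Y[simp]: "i < 4 \<Longrightarrow> ev z (Y i) = z (2*i+1)"
  unfolding X_def Y_def by (auto simp: ev_var)

lemma ev_dep: "\<forall>j<8. z j = z' j \<Longrightarrow> ev z p = ev z' p"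
  unfolding ev_def by (rule ge8_dep)

lemma ev_inj: "(\<And>z. ev z p = ev z q) \<Longrightarrow> p = q"
proof -
  assume "\<And>z. ev z p = ev z q"
  hence "\<forall>z. ge8 (\<lambda>c. c) (p - q) z = 0" using ev_diff unfolding ev_def[symmetric] by simp
  hence "p - q = 0" by (rule ge8_inj)
  thus ?thesis by simp
qed

lemma ev_eval8: "ev z (eval8 p s) = ev (\<lambda>j. ev z (s j)) p"
  unfolding eval8_ge using ge8_comp[OF ev_rh rh_L8, of z p s] ev_L8 by (simp add: ev_def)

definition pe :: "nat \<Rightarrow> (nat \<Rightarrow> complex) \<Rightarrow> P8 \<Rightarrow> complex poly" where
  "pe K z p = ge8 (\<lambda>c. [:c:]) p (\<lambda>j. if j = K then [:0,1:] else [:z j:])"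

lemma pe_rh: "rh (pe K z)"
  unfolding pe_def using ge8_rh[OF rh_pC] by simp

lemma pe_mult: "pe K z (p*q) = pe K z p * pe K z q"
  using rh_mult[OF pe_rh] by auto

lemma rh_polyt: "rh (\<lambda>r. poly r (t::complex))" by (simp add: rh_def)

lemma poly_pe: "poly (pe K z p) t = ev (z(K:=t)) p"
proof -
  have e: "(\<lambda>j. poly (if j = K then [:0,1:] else [:z j:]) t) = z(K:=t)" by (auto simp: fun_eq_iff)
  show ?thesis
  unfolding pe_def ev_def using ge8_comp[OF rh_polyt[of t] rh_pC, of p] e by simp
qed



definition Fz :: "complex \<Rightarrow> complex \<Rightarrow> complex \<Rightarrow> complex \<Rightarrow> (nat \<Rightarrow> complex) \<Rightarrow> complex" where
  "Fz a b c d z = (a+d)/2*(z 0*z 2*z 4*z 6 + z 1*z 3*z 5*z 7) + (a-d)/2*(z 0*z 2*z 5*z 7 + z 1*z 3*z 4*z 6)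
     + (b+c)/2*(z 0*z 3*z 4*z 7 + z 1*z 2*z 5*z 6) + (b-c)/2*(z 0*z 3*z 5*z 6 + z 1*z 2*z 4*z 7)"

lemma ev_G: "ev z (G a b c d) = Fz a b c d z"
  unfolding G_def Fz_def by (simp add: mult_ac)

lemma Fz_affine: "K < 8 \<Longrightarrow> Fz a b c d (z(K:=t)) = Fz a b c d (z(K:=0)) + t * (Fz a b c d (z(K:=1)) - Fz a b c d (z(K:=0)))"
proof -
  assume "K < 8"
  hence "K = 0 \<or> K = 1 \<or> K = 2 \<or> K = 3 \<or> K = 4 \<or> K = 5 \<or> K = 6 \<or> K = 7" by linarith
  thus ?thesis by (elim disjE) (simp_all add: Fz_def algebra_simps)
qed

lemma indep:
  fixes f :: "(nat \<Rightarrow> complex) \<Rightarrow> complex"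
  assumes dep: "\<And>z z'. \<forall>j<8. z j = z' j \<Longrightarrow> f z = f z'"
    and ind: "\<And>K z t. K < 8 \<Longrightarrow> K \<notin> S \<Longrightarrow> f (z(K:=t)) = f z"
    and agree: "\<forall>K<8. K \<in> S \<longrightarrow> z K = z' K"
  shows "f z = f z'"
proof -
  have "n \<le> 8 \<Longrightarrow> f z = f (\<lambda>k. if k < n then z' k else z k)" for n
  proof (induction n)
    case 0 then show ?case by simp
  next
    case (Suc n)
    have e: "(\<lambda>k. if k < Suc n then z' k else z k) = (\<lambda>k. if k < n then z' k else z k)(n := z' n)"
      by (auto simp: fun_eq_iff)
    show ?case
    proof (cases "n \<in> S")
      case True
      then have "(\<lambda>k. if k < n then z' k else z k)(n := z' n) = (\<lambda>k. if k < n then z' k else z k)"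
        using agree Suc by (auto simp: fun_eq_iff)
      then show ?thesis using Suc e by simp
    next
      case False
      then show ?thesis using Suc e ind[of n] by simp
    qed
  qed
  from this[of 8] have "f z = f (\<lambda>k. if k < 8 then z' k else z k)" by simp
  also have "\<dots> = f z'" by (rule dep) auto
  finally show ?thesis .
qed

lemma ev_const:
  assumes "\<And>K z t. K < 8 \<Longrightarrow> ev (z(K:=t)) p = ev z p"
  shows "p = L8 (ev (\<lambda>_. 0) p)"
proof (rule ev_inj)
  fix z
  have "ev z p = ev (\<lambda>_. 0) p"
    by (rule indep[where S="{}" and f="\<lambda>z. ev z p"]) (auto intro: ev_dep assms)
  thus "ev z p = ev z (L8 (ev (\<lambda>_. 0) p))" by simp
qed

lemma L8_unit: "c \<noteq> 0 \<Longrightarrow> is_unit (L8 c)"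
proof -
  assume "c \<noteq> 0"
  have "L8 c * L8 (1/c) = L8 (c * (1/c))" using rh_mult[OF rh_L8] by metis
  also have "\<dots> = 1" using \<open>c \<noteq> 0\<close> rh_1[OF rh_L8] by simp
  finally show ?thesis by (metis dvdI dvd_mult_right)
qed

lemma unit_const:
  assumes "is_unit u" "K < 8"
  shows "ev (z(K:=t)) u = ev z u"
proof -
  obtain v where "1 = u * v" using assms by (auto elim: dvdE)
  hence "pe K z u * pe K z v = 1" using pe_mult rh_1[OF pe_rh] by metis
  hence "is_unit (pe K z u)" by (metis dvd_triv_left)
  then obtain c where c: "pe K z u = [:c:]" using is_unit_poly_iff by blast
  have "ev (z(K:=t)) u = poly (pe K z u) t" by (simp add: poly_pe)
  also have "\<dots> = poly (pe K z u) (z K)" using c by simp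
  also have "\<dots> = ev z u" by (simp add: poly_pe)
  finally show ?thesis .
qed

lemma poly_affine: "(\<And>t. poly r t = (\<alpha>::complex) + t * \<beta>) \<Longrightarrow> degree r \<le> 1"
proof -
  assume "\<And>t. poly r t = \<alpha> + t * \<beta>"
  hence "poly r = poly [:\<alpha>, \<beta>:]" by (auto simp: fun_eq_iff)
  hence "r = [:\<alpha>, \<beta>:]" using poly_eq_poly_eq_iff by blast
  thus ?thesis by simp
qed

definition dep :: "nat \<Rightarrow> P8 \<Rightarrow> bool" where
  "dep K r \<longleftrightarrow> (\<exists>z. ev z r \<noteq> ev (z(K:=0)) r)"

lemma nodep: "K < 8 \<Longrightarrow> \<not> dep K r \<Longrightarrow> ev (z(K:=t)) r = ev z r"
  unfolding dep_def by (metis fun_upd_upd)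

lemma ev_upd0: "K < 8 \<Longrightarrow> ev z (eval8 p (\<lambda>j. if j = K then L8 0 else var j)) = ev (z(K:=0)) p"
  unfolding ev_eval8 by (rule ev_dep) (auto simp: ev_var)

lemma dep_poly:
  assumes "dep K p" "K < 8"
  obtains D where "D \<noteq> 0" "\<And>z. ev z D = ev z p - ev (z(K:=0)) p"
proof -
  let ?D = "p - eval8 p (\<lambda>j. if j = K then L8 0 else var j)"
  have e: "ev z ?D = ev z p - ev (z(K:=0)) p" for z using ev_upd0[OF assms(2)] by simp
  moreover have "?D \<noteq> 0" using assms(1) e unfolding dep_def by (metis ev_0 right_minus_eq)
  ultimately show ?thesis using that by blast
qed

lemma nonconst_deg:
  assumes "poly (r::complex poly) x \<noteq> poly r y"
  shows "degree r \<ge> 1" "r \<noteq> 0"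
proof -
  show "degree r \<ge> 1"
  proof (rule ccontr)
    assume "\<not> degree r \<ge> 1"
    hence "degree r = 0" by simp
    then obtain c where "r = [:c:]" by (metis degree_eq_zeroE)
    thus False using assms by simp
  qed
  thus "r \<noteq> 0" by auto
qed

lemma not_both_dep:
  assumes pq: "p * q = G a b c d" and K: "K < 8"
  shows "\<not> (dep K p \<and> dep K q)"
proof
  assume "dep K p \<and> dep K q"
  then obtain Dp Dq where Dp: "Dp \<noteq> 0" "\<And>z. ev z Dp = ev z p - ev (z(K:=0)) p"
     and Dq: "Dq \<noteq> 0" "\<And>z. ev z Dq = ev z q - ev (z(K:=0)) q"
    using dep_poly K by metis
  have "Dp * Dq \<noteq> 0" using Dp Dq by simp
  then obtain z where z: "ev z (Dp * Dq) \<noteq> 0" using ev_inj[of "Dp*Dq" 0] by auto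
  hence 1: "poly (pe K z p) (z K) \<noteq> poly (pe K z p) 0" and 2: "poly (pe K z q) (z K) \<noteq> poly (pe K z q) 0"
    using Dp Dq by (auto simp: poly_pe)
  have "degree (pe K z p * pe K z q) = degree (pe K z p) + degree (pe K z q)"
    using nonconst_deg(2)[OF 1] nonconst_deg(2)[OF 2] by (rule degree_mult_eq)
  moreover have "pe K z p * pe K z q = pe K z (G a b c d)" using pq pe_mult by metis
  ultimately have "degree (pe K z (G a b c d)) \<ge> 2"
    using nonconst_deg(1)[OF 1] nonconst_deg(1)[OF 2] by simp
  moreover have "degree (pe K z (G a b c d)) \<le> 1"
  proof (rule poly_affine)
    fix t
    show "poly (pe K z (G a b c d)) t = Fz a b c d (z(K:=0)) + t * (Fz a b c d (z(K:=1)) - Fz a b c d (z(K:=0)))"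
      unfolding poly_pe ev_G by (rule Fz_affine[OF K])
  qed
  ultimately show False by simp
qed



definition Fe :: "complex \<Rightarrow> complex \<Rightarrow> complex \<Rightarrow> complex \<Rightarrow> (nat \<Rightarrow> complex) \<Rightarrow> complex" where
  "Fe e1 e2 e3 e4 z = e1*(z 0*z 2*z 4*z 6 + z 1*z 3*z 5*z 7) + e2*(z 0*z 2*z 5*z 7 + z 1*z 3*z 4*z 6)
     + e3*(z 0*z 3*z 4*z 7 + z 1*z 2*z 5*z 6) + e4*(z 0*z 3*z 5*z 6 + z 1*z 2*z 4*z 7)"

lemma Fz_Fe: "Fz a b c d z = Fe ((a+d)/2) ((a-d)/2) ((b+c)/2) ((b-c)/2) z"
  unfolding Fz_def Fe_def ..

definition Qe :: "complex \<Rightarrow> complex \<Rightarrow> complex \<Rightarrow> complex \<Rightarrow> bool" where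
  "Qe e1 e2 e3 e4 \<longleftrightarrow> (e1 = 0 \<and> e2 = 0 \<and> e3 = 0 \<and> e4 = 0)
     \<or> (e1 = 0 \<and> e2 = 0 \<and> e3*e3 = e4*e4) \<or> (e3 = 0 \<and> e4 = 0 \<and> e1*e1 = e2*e2)
     \<or> (e1 = 0 \<and> e3 = 0 \<and> e2*e2 = e4*e4) \<or> (e2 = 0 \<and> e4 = 0 \<and> e1*e1 = e3*e3)
     \<or> (e1 = 0 \<and> e4 = 0 \<and> e2*e2 = e3*e3) \<or> (e2 = 0 \<and> e3 = 0 \<and> e1*e1 = e4*e4)"

lemma alg_zero: "e1*e1 = 0*0 \<Longrightarrow> e2*e2 = 0*0 \<Longrightarrow> e3*e3 = 0*0 \<Longrightarrow> e4*e4 = 0*0 \<Longrightarrow> Qe e1 e2 e3 e4"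
  unfolding Qe_def by simp

lemma alg01: "e1*e3 = 0*0 \<Longrightarrow> e1*e4 = 0*0 \<Longrightarrow> e2*e3 = 0*0 \<Longrightarrow> e2*e4 = 0*0 \<Longrightarrow> e1*e1 = e2*e2 \<Longrightarrow> e3*e3 = e4*e4 \<Longrightarrow> Qe e1 e2 e3 e4"
  unfolding Qe_def by (cases "e1 = 0"; cases "e2 = 0") auto

lemma alg02: "e1*e2 = 0*0 \<Longrightarrow> e1*e4 = 0*0 \<Longrightarrow> e2*e3 = 0*0 \<Longrightarrow> e3*e4 = 0*0 \<Longrightarrow> e1*e1 = e3*e3 \<Longrightarrow> e2*e2 = e4*e4 \<Longrightarrow> Qe e1 e2 e3 e4"
  unfolding Qe_def by (cases "e1 = 0"; cases "e3 = 0") auto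

lemma alg03: "e1*e2 = 0*0 \<Longrightarrow> e1*e3 = 0*0 \<Longrightarrow> e2*e4 = 0*0 \<Longrightarrow> e3*e4 = 0*0 \<Longrightarrow> e1*e1 = e4*e4 \<Longrightarrow> e2*e2 = e3*e3 \<Longrightarrow> Qe e1 e2 e3 e4"
  unfolding Qe_def by (cases "e1 = 0"; cases "e4 = 0") auto

definition msel :: "(nat \<Rightarrow> bool) \<Rightarrow> (nat \<Rightarrow> complex) \<Rightarrow> (nat \<Rightarrow> complex) \<Rightarrow> nat \<Rightarrow> complex" where
  "msel s z1 z2 = (\<lambda>k. if s (k div 2) then z1 k else z2 k)"

definition pt :: "complex list \<Rightarrow> nat \<Rightarrow> complex" where
  "pt l k = (if k < length l then l ! k else 0)"

lemma final_cases_e: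
  assumes R: "\<And>z1 z2 z1' z2'. Fe e1 e2 e3 e4 (msel s z1 z2) * Fe e1 e2 e3 e4 (msel s z1' z2')
                 = Fe e1 e2 e3 e4 (msel s z1 z2') * Fe e1 e2 e3 e4 (msel s z1' z2)"
    and s0: "s 0" and na: "\<not> (s 1 \<and> s 2 \<and> s 3)"
  shows "Qe e1 e2 e3 e4"
proof -
  { assume cs: "\<not> s 1" "\<not> s 2" "\<not> s 3"
    have q0: "e1 * e1 = 0 * 0" using R[of "pt [1,0,0,0,0,0,0,0]" "pt [0,0,1,0,1,0,1,0]" "pt [0,1,0,0,0,0,0,0]" "pt [0,0,0,1,0,1,0,1]"] s0 cs by (simp add: Fe_def msel_def pt_def mult.commute)
    have q1: "e2 * e2 = 0 * 0" using R[of "pt [1,0,0,0,0,0,0,0]" "pt [0,0,1,0,0,1,0,1]" "pt [0,1,0,0,0,0,0,0]" "pt [0,0,0,1,1,0,1,0]"] s0 cs by (simp add: Fe_def msel_def pt_def mult.commute)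
    have q2: "e3 * e3 = 0 * 0" using R[of "pt [1,0,0,0,0,0,0,0]" "pt [0,0,0,1,1,0,0,1]" "pt [0,1,0,0,0,0,0,0]" "pt [0,0,1,0,0,1,1,0]"] s0 cs by (simp add: Fe_def msel_def pt_def mult.commute)
    have q3: "e4 * e4 = 0 * 0" using R[of "pt [1,0,0,0,0,0,0,0]" "pt [0,0,0,1,0,1,1,0]" "pt [0,1,0,0,0,0,0,0]" "pt [0,0,1,0,1,0,0,1]"] s0 cs by (simp add: Fe_def msel_def pt_def mult.commute)
    have ?thesis by (rule alg_zero[OF q0 q1 q2 q3]) }  moreover
  { assume cs: "\<not> s 1" "\<not> s 2" "s 3"
    have q0: "e1 * e2 = 0 * 0" using R[of "pt [1,0,0,0,0,0,1,0]" "pt [0,0,1,0,1,0,0,0]" "pt [1,0,0,0,0,0,0,1]" "pt [0,0,1,0,0,1,0,0]"] s0 cs by (simp add: Fe_def msel_def pt_def mult.commute)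
    have q1: "e1 * e3 = 0 * 0" using R[of "pt [1,0,0,0,0,0,1,0]" "pt [0,0,1,0,1,0,0,0]" "pt [1,0,0,0,0,0,0,1]" "pt [0,0,0,1,1,0,0,0]"] s0 cs by (simp add: Fe_def msel_def pt_def mult.commute)
    have q2: "e2 * e4 = 0 * 0" using R[of "pt [1,0,0,0,0,0,0,1]" "pt [0,0,1,0,0,1,0,0]" "pt [1,0,0,0,0,0,1,0]" "pt [0,0,0,1,0,1,0,0]"] s0 cs by (simp add: Fe_def msel_def pt_def mult.commute)
    have q3: "e3 * e4 = 0 * 0" using R[of "pt [1,0,0,0,0,0,0,1]" "pt [0,0,0,1,1,0,0,0]" "pt [1,0,0,0,0,0,1,0]" "pt [0,0,0,1,0,1,0,0]"] s0 cs by (simp add: Fe_def msel_def pt_def mult.commute)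
    have q4: "e1 * e1 = e4 * e4" using R[of "pt [1,0,0,0,0,0,1,0]" "pt [0,0,1,0,1,0,0,0]" "pt [0,1,0,0,0,0,0,1]" "pt [0,0,0,1,0,1,0,0]"] s0 cs by (simp add: Fe_def msel_def pt_def mult.commute)
    have q5: "e2 * e2 = e3 * e3" using R[of "pt [1,0,0,0,0,0,0,1]" "pt [0,0,1,0,0,1,0,0]" "pt [0,1,0,0,0,0,1,0]" "pt [0,0,0,1,1,0,0,0]"] s0 cs by (simp add: Fe_def msel_def pt_def mult.commute)
    have ?thesis by (rule alg03[OF q0 q1 q2 q3 q4 q5]) }  moreover
  { assume cs: "\<not> s 1" "s 2" "\<not> s 3"
    have q0: "e1 * e2 = 0 * 0" using R[of "pt [1,0,0,0,1,0,0,0]" "pt [0,0,1,0,0,0,1,0]" "pt [1,0,0,0,0,1,0,0]" "pt [0,0,1,0,0,0,0,1]"] s0 cs by (simp add: Fe_def msel_def pt_def mult.commute)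
    have q1: "e1 * e4 = 0 * 0" using R[of "pt [1,0,0,0,1,0,0,0]" "pt [0,0,1,0,0,0,1,0]" "pt [1,0,0,0,0,1,0,0]" "pt [0,0,0,1,0,0,1,0]"] s0 cs by (simp add: Fe_def msel_def pt_def mult.commute)
    have q2: "e2 * e3 = 0 * 0" using R[of "pt [1,0,0,0,0,1,0,0]" "pt [0,0,1,0,0,0,0,1]" "pt [1,0,0,0,1,0,0,0]" "pt [0,0,0,1,0,0,0,1]"] s0 cs by (simp add: Fe_def msel_def pt_def mult.commute)
    have q3: "e3 * e4 = 0 * 0" using R[of "pt [1,0,0,0,1,0,0,0]" "pt [0,0,0,1,0,0,0,1]" "pt [1,0,0,0,0,1,0,0]" "pt [0,0,0,1,0,0,1,0]"] s0 cs by (simp add: Fe_def msel_def pt_def mult.commute)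
    have q4: "e1 * e1 = e3 * e3" using R[of "pt [1,0,0,0,1,0,0,0]" "pt [0,0,1,0,0,0,1,0]" "pt [0,1,0,0,0,1,0,0]" "pt [0,0,0,1,0,0,0,1]"] s0 cs by (simp add: Fe_def msel_def pt_def mult.commute)
    have q5: "e2 * e2 = e4 * e4" using R[of "pt [1,0,0,0,0,1,0,0]" "pt [0,0,1,0,0,0,0,1]" "pt [0,1,0,0,1,0,0,0]" "pt [0,0,0,1,0,0,1,0]"] s0 cs by (simp add: Fe_def msel_def pt_def mult.commute)
    have ?thesis by (rule alg02[OF q0 q1 q2 q3 q4 q5]) }  moreover
  { assume cs: "\<not> s 1" "s 2" "s 3"
    have q0: "e1 * e1 = 0 * 0" using R[of "pt [1,0,0,0,1,0,1,0]" "pt [0,0,1,0,0,0,0,0]" "pt [0,1,0,0,0,1,0,1]" "pt [0,0,0,1,0,0,0,0]"] s0 cs by (simp add: Fe_def msel_def pt_def mult.commute)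
    have q1: "e2 * e2 = 0 * 0" using R[of "pt [1,0,0,0,0,1,0,1]" "pt [0,0,1,0,0,0,0,0]" "pt [0,1,0,0,1,0,1,0]" "pt [0,0,0,1,0,0,0,0]"] s0 cs by (simp add: Fe_def msel_def pt_def mult.commute)
    have q2: "e3 * e3 = 0 * 0" using R[of "pt [1,0,0,0,1,0,0,1]" "pt [0,0,0,1,0,0,0,0]" "pt [0,1,0,0,0,1,1,0]" "pt [0,0,1,0,0,0,0,0]"] s0 cs by (simp add: Fe_def msel_def pt_def mult.commute)
    have q3: "e4 * e4 = 0 * 0" using R[of "pt [1,0,0,0,0,1,1,0]" "pt [0,0,0,1,0,0,0,0]" "pt [0,1,0,0,1,0,0,1]" "pt [0,0,1,0,0,0,0,0]"] s0 cs by (simp add: Fe_def msel_def pt_def mult.commute)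
    have ?thesis by (rule alg_zero[OF q0 q1 q2 q3]) }  moreover
  { assume cs: "s 1" "\<not> s 2" "\<not> s 3"
    have q0: "e1 * e3 = 0 * 0" using R[of "pt [1,0,1,0,0,0,0,0]" "pt [0,0,0,0,1,0,1,0]" "pt [1,0,0,1,0,0,0,0]" "pt [0,0,0,0,1,0,0,1]"] s0 cs by (simp add: Fe_def msel_def pt_def mult.commute)
    have q1: "e1 * e4 = 0 * 0" using R[of "pt [1,0,1,0,0,0,0,0]" "pt [0,0,0,0,1,0,1,0]" "pt [1,0,0,1,0,0,0,0]" "pt [0,0,0,0,0,1,1,0]"] s0 cs by (simp add: Fe_def msel_def pt_def mult.commute)
    have q2: "e2 * e3 = 0 * 0" using R[of "pt [1,0,1,0,0,0,0,0]" "pt [0,0,0,0,0,1,0,1]" "pt [1,0,0,1,0,0,0,0]" "pt [0,0,0,0,1,0,0,1]"] s0 cs by (simp add: Fe_def msel_def pt_def mult.commute)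
    have q3: "e2 * e4 = 0 * 0" using R[of "pt [1,0,1,0,0,0,0,0]" "pt [0,0,0,0,0,1,0,1]" "pt [1,0,0,1,0,0,0,0]" "pt [0,0,0,0,0,1,1,0]"] s0 cs by (simp add: Fe_def msel_def pt_def mult.commute)
    have q4: "e1 * e1 = e2 * e2" using R[of "pt [1,0,1,0,0,0,0,0]" "pt [0,0,0,0,1,0,1,0]" "pt [0,1,0,1,0,0,0,0]" "pt [0,0,0,0,0,1,0,1]"] s0 cs by (simp add: Fe_def msel_def pt_def mult.commute)
    have q5: "e3 * e3 = e4 * e4" using R[of "pt [1,0,0,1,0,0,0,0]" "pt [0,0,0,0,1,0,0,1]" "pt [0,1,1,0,0,0,0,0]" "pt [0,0,0,0,0,1,1,0]"] s0 cs by (simp add: Fe_def msel_def pt_def mult.commute)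
    have ?thesis by (rule alg01[OF q0 q1 q2 q3 q4 q5]) }  moreover
  { assume cs: "s 1" "\<not> s 2" "s 3"
    have q0: "e1 * e1 = 0 * 0" using R[of "pt [1,0,1,0,0,0,1,0]" "pt [0,0,0,0,1,0,0,0]" "pt [0,1,0,1,0,0,0,1]" "pt [0,0,0,0,0,1,0,0]"] s0 cs by (simp add: Fe_def msel_def pt_def mult.commute)
    have q1: "e2 * e2 = 0 * 0" using R[of "pt [1,0,1,0,0,0,0,1]" "pt [0,0,0,0,0,1,0,0]" "pt [0,1,0,1,0,0,1,0]" "pt [0,0,0,0,1,0,0,0]"] s0 cs by (simp add: Fe_def msel_def pt_def mult.commute)
    have q2: "e3 * e3 = 0 * 0" using R[of "pt [1,0,0,1,0,0,0,1]" "pt [0,0,0,0,1,0,0,0]" "pt [0,1,1,0,0,0,1,0]" "pt [0,0,0,0,0,1,0,0]"] s0 cs by (simp add: Fe_def msel_def pt_def mult.commute)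
    have q3: "e4 * e4 = 0 * 0" using R[of "pt [1,0,0,1,0,0,1,0]" "pt [0,0,0,0,0,1,0,0]" "pt [0,1,1,0,0,0,0,1]" "pt [0,0,0,0,1,0,0,0]"] s0 cs by (simp add: Fe_def msel_def pt_def mult.commute)
    have ?thesis by (rule alg_zero[OF q0 q1 q2 q3]) }  moreover
  { assume cs: "s 1" "s 2" "\<not> s 3"
    have q0: "e1 * e1 = 0 * 0" using R[of "pt [1,0,1,0,1,0,0,0]" "pt [0,0,0,0,0,0,1,0]" "pt [0,1,0,1,0,1,0,0]" "pt [0,0,0,0,0,0,0,1]"] s0 cs by (simp add: Fe_def msel_def pt_def mult.commute)
    have q1: "e2 * e2 = 0 * 0" using R[of "pt [1,0,1,0,0,1,0,0]" "pt [0,0,0,0,0,0,0,1]" "pt [0,1,0,1,1,0,0,0]" "pt [0,0,0,0,0,0,1,0]"] s0 cs by (simp add: Fe_def msel_def pt_def mult.commute)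
    have q2: "e3 * e3 = 0 * 0" using R[of "pt [1,0,0,1,1,0,0,0]" "pt [0,0,0,0,0,0,0,1]" "pt [0,1,1,0,0,1,0,0]" "pt [0,0,0,0,0,0,1,0]"] s0 cs by (simp add: Fe_def msel_def pt_def mult.commute)
    have q3: "e4 * e4 = 0 * 0" using R[of "pt [1,0,0,1,0,1,0,0]" "pt [0,0,0,0,0,0,1,0]" "pt [0,1,1,0,1,0,0,0]" "pt [0,0,0,0,0,0,0,1]"] s0 cs by (simp add: Fe_def msel_def pt_def mult.commute)
    have ?thesis by (rule alg_zero[OF q0 q1 q2 q3]) }
  ultimately show ?thesis using na by blast
qed



definition cond :: "complex \<Rightarrow> complex \<Rightarrow> complex \<Rightarrow> complex \<Rightarrow> bool" where
  "cond a b c d \<longleftrightarrow> ((a^2 = b^2 \<and> b^2 = c^2 \<and> c^2 = d^2) \<or>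
            (a = 0 \<and> b = 0 \<and> c = 0) \<or> (a = 0 \<and> b = 0 \<and> d = 0) \<or>
            (a = 0 \<and> c = 0 \<and> d = 0) \<or> (b = 0 \<and> c = 0 \<and> d = 0))"

lemma t1: "(a+d)/2 = (0::complex) \<Longrightarrow> (a-d)/2 = (0::complex) \<Longrightarrow> a = 0 \<and> d = 0"
  by (simp add: field_simps) 
lemma t2: "(a+d)/2 = 0 \<longleftrightarrow> d = -(a::complex)" "(a-d)/2 = 0 \<longleftrightarrow> d = (a::complex)"
  by (auto simp: field_simps eq_neg_iff_add_eq_0 add.commute)

lemma e_zero: "(a+d)/2 = (0::complex) \<Longrightarrow> (a-d)/2 = 0 \<Longrightarrow> (b+c)/2 = 0 \<Longrightarrow> (b-c)/2 = (0::complex) \<Longrightarrow> a=0 \<and> b=0 \<and> c=0 \<and> d=0"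
  using t1[of a d] t1[of b c] by blast

lemma t3: "(b+c)/2*((b+c)/2) - (b-c)/2*((b-c)/2) = b*(c::complex)"
  by (simp add: field_simps)
lemma t4: "(x+x)/2 = (x::complex)" "(x - -x)/2 = x" "(x + -x)/2 = 0" "(x - x)/2 = 0" by (simp_all add: field_simps)

lemma Qe_cond:
  assumes "Qe ((a+d)/2) ((a-d)/2) ((b+c)/2) ((b-c)/2)" "\<not> (a = 0 \<and> b = 0 \<and> c = 0 \<and> d = 0)"
  shows "cond a b c d"
  using assms(1) unfolding Qe_def
proof (elim disjE conjE)
  assume "(a+d)/2 = 0" "(a-d)/2 = 0" "(b+c)/2 = 0" "(b-c)/2 = 0"
  thus ?thesis using e_zero assms(2) by blast
next
  assume h: "(a+d)/2 = 0" "(a-d)/2 = 0" "(b+c)/2 * ((b+c)/2) = (b-c)/2 * ((b-c)/2)"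
  hence "a = 0 \<and> d = 0" using t1[of a d] by blast
  hence "a = 0" "d = 0" by auto
  moreover have "b * c = 0" using h(3) t3[of b c] by simp
  ultimately show ?thesis unfolding cond_def by auto
next
  assume h: "(b+c)/2 = 0" "(b-c)/2 = 0" "(a+d)/2 * ((a+d)/2) = (a-d)/2 * ((a-d)/2)"
  hence "b = 0 \<and> c = 0" using t1[of b c] by blast
  hence "b = 0" "c = 0" by auto
  moreover have "a * d = 0" using h(3) t3[of a d] by simp
  ultimately show ?thesis unfolding cond_def by auto
next
  assume h: "(a+d)/2 = 0" "(b+c)/2 = 0" "(a-d)/2 * ((a-d)/2) = (b-c)/2 * ((b-c)/2)"
  hence e: "d = -a" "c = -b" using t2(1)[of a d] t2(1)[of b c] by simp_all
  with h(3) have "a^2 = b^2" by (simp add: t4 power2_eq_square)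
  thus ?thesis using e unfolding cond_def by simp
next
  assume h: "(a-d)/2 = 0" "(b-c)/2 = 0" "(a+d)/2 * ((a+d)/2) = (b+c)/2 * ((b+c)/2)"
  hence e: "d = a" "c = b" using t2(2)[of a d] t2(2)[of b c] by simp_all
  with h(3) have "a^2 = b^2" by (simp add: t4 power2_eq_square)
  thus ?thesis using e unfolding cond_def by simp
next
  assume h: "(a+d)/2 = 0" "(b-c)/2 = 0" "(a-d)/2 * ((a-d)/2) = (b+c)/2 * ((b+c)/2)"
  hence e: "d = -a" "c = b" using t2(1)[of a d] t2(2)[of b c] by simp_all
  with h(3) have "a^2 = b^2" by (simp add: t4 power2_eq_square)
  thus ?thesis using e unfolding cond_def by simp
next
  assume h: "(a-d)/2 = 0" "(b+c)/2 = 0" "(a+d)/2 * ((a+d)/2) = (b-c)/2 * ((b-c)/2)"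
  hence e: "d = a" "c = -b" using t2(2)[of a d] t2(1)[of b c] by simp_all
  with h(3) have "a^2 = b^2" by (simp add: t4 power2_eq_square)
  thus ?thesis using e unfolding cond_def by simp
qed



definition PR :: "(nat \<times> nat) set" where
  "PR = {(0,1),(1,0),(2,3),(3,2),(4,5),(5,4),(6,7),(7,6)}"

lemma Fz_dep: "\<forall>k<8. z k = z' k \<Longrightarrow> Fz a b c d z = Fz a b c d z'"
proof -
  assume h: "\<forall>k<8. z k = z' k"
  have "z 0 = z' 0" "z 1 = z' 1" "z 2 = z' 2" "z 3 = z' 3" "z 4 = z' 4" "z 5 = z' 5" "z 6 = z' 6" "z 7 = z' 7"
    using h by simp_all
  thus ?thesis unfolding Fz_def by (simp only:)
qed

lemma PR_cases: "(k1,k2) \<in> PR \<Longrightarrow> (k1 = 0 \<and> k2 = 1) \<or> (k1 = 1 \<and> k2 = 0) \<or> (k1 = 2 \<and> k2 = 3) \<or> (k1 = 3 \<and> k2 = 2) \<or> (k1 = 4 \<and> k2 = 5) \<or> (k1 = 5 \<and> k2 = 4) \<or> (k1 = 6 \<and> k2 = 7) \<or> (k1 = 7 \<and> k2 = 6)"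
  unfolding PR_def by blast

lemma pair00: "(k1,k2) \<in> PR \<Longrightarrow> Fz a b c d (r(k1:=0,k2:=0)) = 0"
  by (drule PR_cases, elim disjE conjE) (simp_all add: Fz_def)

lemma Fe_kill:
  assumes "(k1,k2) \<in> PR" "\<forall>r. Fe e1 e2 e3 e4 (r(k1:=1,k2:=0)) = 0"
  shows "e1 = 0 \<and> e2 = 0 \<and> e3 = 0 \<and> e4 = 0"
proof -
  have "(k1,k2) = (0,1) \<or> (k1,k2) = (1,0) \<or> (k1,k2) = (2,3) \<or> (k1,k2) = (3,2) \<or> (k1,k2) = (4,5) \<or> (k1,k2) = (5,4) \<or> (k1,k2) = (6,7) \<or> (k1,k2) = (7,6)"
    using assms(1) unfolding PR_def by blast
  thus ?thesis
  proof (elim disjE)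
    assume h: "(k1,k2) = (0,1)"
    hence k: "k1 = 0" "k2 = 1" by simp_all
    have f0: "Fe e1 e2 e3 e4 ((pt [1,0,1,0,1,0,1,0])(0:=1,1:=0)) = 0" using assms(2) k by blast
    have f1: "Fe e1 e2 e3 e4 ((pt [0,1,0,1,0,1,0,1])(0:=1,1:=0)) = 0" using assms(2) k by blast
    have f2: "Fe e1 e2 e3 e4 ((pt [1,0,1,0,0,1,0,1])(0:=1,1:=0)) = 0" using assms(2) k by blast
    have f3: "Fe e1 e2 e3 e4 ((pt [0,1,0,1,1,0,1,0])(0:=1,1:=0)) = 0" using assms(2) k by blast
    have f4: "Fe e1 e2 e3 e4 ((pt [1,0,0,1,1,0,0,1])(0:=1,1:=0)) = 0" using assms(2) k by blast
    have f5: "Fe e1 e2 e3 e4 ((pt [0,1,1,0,0,1,1,0])(0:=1,1:=0)) = 0" using assms(2) k by blast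
    have f6: "Fe e1 e2 e3 e4 ((pt [1,0,0,1,0,1,1,0])(0:=1,1:=0)) = 0" using assms(2) k by blast
    have f7: "Fe e1 e2 e3 e4 ((pt [0,1,1,0,1,0,0,1])(0:=1,1:=0)) = 0" using assms(2) k by blast
    show ?thesis using f0 f1 f2 f3 f4 f5 f6 f7 by (simp add: Fe_def pt_def)
  next
    assume h: "(k1,k2) = (1,0)"
    hence k: "k1 = 1" "k2 = 0" by simp_all
    have f0: "Fe e1 e2 e3 e4 ((pt [1,0,1,0,1,0,1,0])(1:=1,0:=0)) = 0" using assms(2) k by blast
    have f1: "Fe e1 e2 e3 e4 ((pt [0,1,0,1,0,1,0,1])(1:=1,0:=0)) = 0" using assms(2) k by blast
    have f2: "Fe e1 e2 e3 e4 ((pt [1,0,1,0,0,1,0,1])(1:=1,0:=0)) = 0" using assms(2) k by blast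
    have f3: "Fe e1 e2 e3 e4 ((pt [0,1,0,1,1,0,1,0])(1:=1,0:=0)) = 0" using assms(2) k by blast
    have f4: "Fe e1 e2 e3 e4 ((pt [1,0,0,1,1,0,0,1])(1:=1,0:=0)) = 0" using assms(2) k by blast
    have f5: "Fe e1 e2 e3 e4 ((pt [0,1,1,0,0,1,1,0])(1:=1,0:=0)) = 0" using assms(2) k by blast
    have f6: "Fe e1 e2 e3 e4 ((pt [1,0,0,1,0,1,1,0])(1:=1,0:=0)) = 0" using assms(2) k by blast
    have f7: "Fe e1 e2 e3 e4 ((pt [0,1,1,0,1,0,0,1])(1:=1,0:=0)) = 0" using assms(2) k by blast
    show ?thesis using f0 f1 f2 f3 f4 f5 f6 f7 by (simp add: Fe_def pt_def)
  next
    assume h: "(k1,k2) = (2,3)"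
    hence k: "k1 = 2" "k2 = 3" by simp_all
    have f0: "Fe e1 e2 e3 e4 ((pt [1,0,1,0,1,0,1,0])(2:=1,3:=0)) = 0" using assms(2) k by blast
    have f1: "Fe e1 e2 e3 e4 ((pt [0,1,0,1,0,1,0,1])(2:=1,3:=0)) = 0" using assms(2) k by blast
    have f2: "Fe e1 e2 e3 e4 ((pt [1,0,1,0,0,1,0,1])(2:=1,3:=0)) = 0" using assms(2) k by blast
    have f3: "Fe e1 e2 e3 e4 ((pt [0,1,0,1,1,0,1,0])(2:=1,3:=0)) = 0" using assms(2) k by blast
    have f4: "Fe e1 e2 e3 e4 ((pt [1,0,0,1,1,0,0,1])(2:=1,3:=0)) = 0" using assms(2) k by blast
    have f5: "Fe e1 e2 e3 e4 ((pt [0,1,1,0,0,1,1,0])(2:=1,3:=0)) = 0" using assms(2) k by blast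
    have f6: "Fe e1 e2 e3 e4 ((pt [1,0,0,1,0,1,1,0])(2:=1,3:=0)) = 0" using assms(2) k by blast
    have f7: "Fe e1 e2 e3 e4 ((pt [0,1,1,0,1,0,0,1])(2:=1,3:=0)) = 0" using assms(2) k by blast
    show ?thesis using f0 f1 f2 f3 f4 f5 f6 f7 by (simp add: Fe_def pt_def)
  next
    assume h: "(k1,k2) = (3,2)"
    hence k: "k1 = 3" "k2 = 2" by simp_all
    have f0: "Fe e1 e2 e3 e4 ((pt [1,0,1,0,1,0,1,0])(3:=1,2:=0)) = 0" using assms(2) k by blast
    have f1: "Fe e1 e2 e3 e4 ((pt [0,1,0,1,0,1,0,1])(3:=1,2:=0)) = 0" using assms(2) k by blast
    have f2: "Fe e1 e2 e3 e4 ((pt [1,0,1,0,0,1,0,1])(3:=1,2:=0)) = 0" using assms(2) k by blast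
    have f3: "Fe e1 e2 e3 e4 ((pt [0,1,0,1,1,0,1,0])(3:=1,2:=0)) = 0" using assms(2) k by blast
    have f4: "Fe e1 e2 e3 e4 ((pt [1,0,0,1,1,0,0,1])(3:=1,2:=0)) = 0" using assms(2) k by blast
    have f5: "Fe e1 e2 e3 e4 ((pt [0,1,1,0,0,1,1,0])(3:=1,2:=0)) = 0" using assms(2) k by blast
    have f6: "Fe e1 e2 e3 e4 ((pt [1,0,0,1,0,1,1,0])(3:=1,2:=0)) = 0" using assms(2) k by blast
    have f7: "Fe e1 e2 e3 e4 ((pt [0,1,1,0,1,0,0,1])(3:=1,2:=0)) = 0" using assms(2) k by blast
    show ?thesis using f0 f1 f2 f3 f4 f5 f6 f7 by (simp add: Fe_def pt_def)
  next
    assume h: "(k1,k2) = (4,5)"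
    hence k: "k1 = 4" "k2 = 5" by simp_all
    have f0: "Fe e1 e2 e3 e4 ((pt [1,0,1,0,1,0,1,0])(4:=1,5:=0)) = 0" using assms(2) k by blast
    have f1: "Fe e1 e2 e3 e4 ((pt [0,1,0,1,0,1,0,1])(4:=1,5:=0)) = 0" using assms(2) k by blast
    have f2: "Fe e1 e2 e3 e4 ((pt [1,0,1,0,0,1,0,1])(4:=1,5:=0)) = 0" using assms(2) k by blast
    have f3: "Fe e1 e2 e3 e4 ((pt [0,1,0,1,1,0,1,0])(4:=1,5:=0)) = 0" using assms(2) k by blast
    have f4: "Fe e1 e2 e3 e4 ((pt [1,0,0,1,1,0,0,1])(4:=1,5:=0)) = 0" using assms(2) k by blast
    have f5: "Fe e1 e2 e3 e4 ((pt [0,1,1,0,0,1,1,0])(4:=1,5:=0)) = 0" using assms(2) k by blast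
    have f6: "Fe e1 e2 e3 e4 ((pt [1,0,0,1,0,1,1,0])(4:=1,5:=0)) = 0" using assms(2) k by blast
    have f7: "Fe e1 e2 e3 e4 ((pt [0,1,1,0,1,0,0,1])(4:=1,5:=0)) = 0" using assms(2) k by blast
    show ?thesis using f0 f1 f2 f3 f4 f5 f6 f7 by (simp add: Fe_def pt_def)
  next
    assume h: "(k1,k2) = (5,4)"
    hence k: "k1 = 5" "k2 = 4" by simp_all
    have f0: "Fe e1 e2 e3 e4 ((pt [1,0,1,0,1,0,1,0])(5:=1,4:=0)) = 0" using assms(2) k by blast
    have f1: "Fe e1 e2 e3 e4 ((pt [0,1,0,1,0,1,0,1])(5:=1,4:=0)) = 0" using assms(2) k by blast
    have f2: "Fe e1 e2 e3 e4 ((pt [1,0,1,0,0,1,0,1])(5:=1,4:=0)) = 0" using assms(2) k by blast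
    have f3: "Fe e1 e2 e3 e4 ((pt [0,1,0,1,1,0,1,0])(5:=1,4:=0)) = 0" using assms(2) k by blast
    have f4: "Fe e1 e2 e3 e4 ((pt [1,0,0,1,1,0,0,1])(5:=1,4:=0)) = 0" using assms(2) k by blast
    have f5: "Fe e1 e2 e3 e4 ((pt [0,1,1,0,0,1,1,0])(5:=1,4:=0)) = 0" using assms(2) k by blast
    have f6: "Fe e1 e2 e3 e4 ((pt [1,0,0,1,0,1,1,0])(5:=1,4:=0)) = 0" using assms(2) k by blast
    have f7: "Fe e1 e2 e3 e4 ((pt [0,1,1,0,1,0,0,1])(5:=1,4:=0)) = 0" using assms(2) k by blast
    show ?thesis using f0 f1 f2 f3 f4 f5 f6 f7 by (simp add: Fe_def pt_def)
  next
    assume h: "(k1,k2) = (6,7)"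
    hence k: "k1 = 6" "k2 = 7" by simp_all
    have f0: "Fe e1 e2 e3 e4 ((pt [1,0,1,0,1,0,1,0])(6:=1,7:=0)) = 0" using assms(2) k by blast
    have f1: "Fe e1 e2 e3 e4 ((pt [0,1,0,1,0,1,0,1])(6:=1,7:=0)) = 0" using assms(2) k by blast
    have f2: "Fe e1 e2 e3 e4 ((pt [1,0,1,0,0,1,0,1])(6:=1,7:=0)) = 0" using assms(2) k by blast
    have f3: "Fe e1 e2 e3 e4 ((pt [0,1,0,1,1,0,1,0])(6:=1,7:=0)) = 0" using assms(2) k by blast
    have f4: "Fe e1 e2 e3 e4 ((pt [1,0,0,1,1,0,0,1])(6:=1,7:=0)) = 0" using assms(2) k by blast
    have f5: "Fe e1 e2 e3 e4 ((pt [0,1,1,0,0,1,1,0])(6:=1,7:=0)) = 0" using assms(2) k by blast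
    have f6: "Fe e1 e2 e3 e4 ((pt [1,0,0,1,0,1,1,0])(6:=1,7:=0)) = 0" using assms(2) k by blast
    have f7: "Fe e1 e2 e3 e4 ((pt [0,1,1,0,1,0,0,1])(6:=1,7:=0)) = 0" using assms(2) k by blast
    show ?thesis using f0 f1 f2 f3 f4 f5 f6 f7 by (simp add: Fe_def pt_def)
  next
    assume h: "(k1,k2) = (7,6)"
    hence k: "k1 = 7" "k2 = 6" by simp_all
    have f0: "Fe e1 e2 e3 e4 ((pt [1,0,1,0,1,0,1,0])(7:=1,6:=0)) = 0" using assms(2) k by blast
    have f1: "Fe e1 e2 e3 e4 ((pt [0,1,0,1,0,1,0,1])(7:=1,6:=0)) = 0" using assms(2) k by blast
    have f2: "Fe e1 e2 e3 e4 ((pt [1,0,1,0,0,1,0,1])(7:=1,6:=0)) = 0" using assms(2) k by blast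
    have f3: "Fe e1 e2 e3 e4 ((pt [0,1,0,1,1,0,1,0])(7:=1,6:=0)) = 0" using assms(2) k by blast
    have f4: "Fe e1 e2 e3 e4 ((pt [1,0,0,1,1,0,0,1])(7:=1,6:=0)) = 0" using assms(2) k by blast
    have f5: "Fe e1 e2 e3 e4 ((pt [0,1,1,0,0,1,1,0])(7:=1,6:=0)) = 0" using assms(2) k by blast
    have f6: "Fe e1 e2 e3 e4 ((pt [1,0,0,1,0,1,1,0])(7:=1,6:=0)) = 0" using assms(2) k by blast
    have f7: "Fe e1 e2 e3 e4 ((pt [0,1,1,0,1,0,0,1])(7:=1,6:=0)) = 0" using assms(2) k by blast
    show ?thesis using f0 f1 f2 f3 f4 f5 f6 f7 by (simp add: Fe_def pt_def)
  qed
qed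

lemma pair_kill:
  assumes "(k1,k2) \<in> PR" "\<forall>r. Fz a b c d (r(k1:=1,k2:=0)) = 0"
  shows "a = 0 \<and> b = 0 \<and> c = 0 \<and> d = 0"
  using Fe_kill[OF assms(1), of "(a+d)/2" "(a-d)/2" "(b+c)/2" "(b-c)/2"] assms(2) e_zero
  unfolding Fz_Fe by blast

lemma Fz_nonzero:
  assumes "\<not> (a = 0 \<and> b = 0 \<and> c = 0 \<and> d = 0)"
  shows "\<exists>z. Fz a b c d z \<noteq> 0"
proof (rule ccontr)
  assume "\<not> ?thesis"
  hence "\<forall>r. Fz a b c d (r(0:=1,1:=0)) = 0" by blast
  moreover have "(0,1) \<in> PR" by (simp add: PR_def)
  ultimately show False using pair_kill[of 0 1] assms by blast
qed

lemma poly_kill: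
  assumes "k1 < 8" "k2 < 8" "k1 \<noteq> k2" "\<And>r. Fz a b c d (r(k1:=1,k2:=0)) * Fz a b c d (r(k1:=0,k2:=1)) = 0"
  shows "(\<forall>r. Fz a b c d (r(k1:=1,k2:=0)) = 0) \<or> (\<forall>r. Fz a b c d (r(k1:=0,k2:=1)) = 0)"
proof -
  define g where "g u v = eval8 (G a b c d) (var(k1:=L8 u, k2:=L8 v))" for u v
  have eg: "ev r (g u v) = Fz a b c d (r(k1:=u,k2:=v))" for r u v
    unfolding g_def ev_eval8 ev_G[symmetric] by (rule ev_dep) (auto simp: ev_var)
  have "g 1 0 * g 0 1 = 0" by (rule ev_inj) (simp add: eg assms(4))
  hence "g 1 0 = 0 \<or> g 0 1 = 0" by simp
  thus ?thesis using eg by (metis ev_0)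
qed

lemma red_cond:
  fixes p q :: P8
  assumes nz: "\<not> (a = 0 \<and> b = 0 \<and> c = 0 \<and> d = 0)" and pq: "p * q = G a b c d"
    and np: "\<not> is_unit p" and nq: "\<not> is_unit q"
  shows "cond a b c d"
proof -
  have evpq: "Fz a b c d z = ev z p * ev z q" for z using pq ev_G by (metis ev_mult)
  obtain z0 where z0: "Fz a b c d z0 \<noteq> 0" using Fz_nonzero[OF nz] by blast
  have somedep: "\<exists>K<8. dep K r" if r: "r = p \<or> r = q" and nu: "\<not> is_unit r" for r
  proof (rule ccontr)
    assume "\<not> ?thesis"
    hence rc: "r = L8 (ev (\<lambda>_. 0) r)" by (intro ev_const) (auto intro: nodep)
    moreover have "ev (\<lambda>_. 0) r \<noteq> 0"
    proof
      assume "ev (\<lambda>_. 0) r = 0"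
      hence "r = 0" using rc rh_0[OF rh_L8] by simp
      thus False using z0 r evpq by auto
    qed
    ultimately show False using L8_unit nu by metis
  qed
  have hp: "\<exists>K<8. dep K p" and hq: "\<exists>K<8. dep K q" using somedep np nq by auto
  have disj: "K < 8 \<Longrightarrow> dep K p \<Longrightarrow> \<not> dep K q" for K using not_both_dep[OF pq] by blast
  have Pind: "ev z p = ev z' p" if "\<forall>K<8. dep K p \<longrightarrow> z K = z' K" for z z'
    by (rule indep[where S="{K. dep K p}" and f="\<lambda>z. ev z p"]) (auto intro: ev_dep nodep simp: that)
  have Qind: "ev z q = ev z' q" if "\<forall>K<8. \<not> dep K p \<longrightarrow> z K = z' K" for z z'
    by (rule indep[where S="{K. \<not> dep K p}" and f="\<lambda>z. ev z q"]) (auto intro: ev_dep nodep simp: that disj)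
  define m where "m z1 z2 = (\<lambda>k. if dep k p then z1 k else z2 k)" for z1 z2 :: "nat \<Rightarrow> complex"
  have R: "Fz a b c d (m z1 z2) * Fz a b c d (m z1' z2') = Fz a b c d (m z1 z2') * Fz a b c d (m z1' z2)"
    for z1 z2 z1' z2'
  proof -
    have 1: "ev (m z1 z2) p = ev (m z1 z2') p" by (rule Pind) (simp add: m_def)
    have 2: "ev (m z1' z2') p = ev (m z1' z2) p" by (rule Pind) (simp add: m_def)
    have 3: "ev (m z1 z2) q = ev (m z1' z2) q" by (rule Qind) (simp add: m_def)
    have 4: "ev (m z1' z2') q = ev (m z1 z2') q" by (rule Qind) (simp add: m_def)
    show ?thesis unfolding evpq 1 2 3 4 by (simp add: mult_ac)
  qed
  have pairR: "Fz a b c d (r(k1:=1,k2:=0)) * Fz a b c d (r(k1:=0,k2:=1)) = 0"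
    if "(k1,k2) \<in> PR" "dep k1 p" "\<not> dep k2 p" for k1 k2 r
  proof -
    have "k1 \<noteq> k2" using that(1) by (auto simp: PR_def)
    have e1: "m (r(k1:=1)) (r(k2:=0)) = r(k1:=1,k2:=0)" using that \<open>k1\<noteq>k2\<close> by (auto simp: m_def fun_eq_iff)
    have e2: "m (r(k1:=0)) (r(k2:=1)) = r(k1:=0,k2:=1)" using that \<open>k1\<noteq>k2\<close> by (auto simp: m_def fun_eq_iff)
    have e3: "m (r(k1:=1)) (r(k2:=1)) = r(k1:=1,k2:=1)" using that \<open>k1\<noteq>k2\<close> by (auto simp: m_def fun_eq_iff)
    have e4: "m (r(k1:=0)) (r(k2:=0)) = r(k1:=0,k2:=0)" using that \<open>k1\<noteq>k2\<close> by (auto simp: m_def fun_eq_iff)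
    from R[of "r(k1:=1)" "r(k2:=0)" "r(k1:=0)" "r(k2:=1)"] show ?thesis
      unfolding e1 e2 e3 e4 pair00[OF that(1)] by simp
  qed
  have PRsym: "(k2,k1) \<in> PR" if "(k1,k2) \<in> PR" for k1 k2 using that by (auto simp: PR_def)
  have PRprops: "k1 < 8 \<and> k2 < 8 \<and> k1 \<noteq> k2" if "(k1,k2) \<in> PR" for k1 k2 using that by (auto simp: PR_def)
  have PRresp: "dep k2 p" if "(k1,k2) \<in> PR" "dep k1 p" for k1 k2
  proof (rule ccontr)
    assume "\<not> dep k2 p"
    hence "(\<forall>r. Fz a b c d (r(k1:=1,k2:=0)) = 0) \<or> (\<forall>r. Fz a b c d (r(k1:=0,k2:=1)) = 0)"
      using poly_kill[of k1 k2 a b c d] pairR[OF that] PRprops[OF that(1)] by blast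
    moreover have eqr: "(r(k1:=0,k2:=1)) = (r(k2:=1,k1:=0))" for r using PRprops[OF that(1)] by (auto simp: fun_eq_iff)
    ultimately have "(\<forall>r. Fz a b c d (r(k1:=1,k2:=0)) = 0) \<or> (\<forall>r. Fz a b c d (r(k2:=1,k1:=0)) = 0)"
    proof (elim disjE)
      assume "\<forall>r. Fz a b c d (r(k1:=1,k2:=0)) = 0" thus ?thesis by blast
    next
      assume h: "\<forall>r. Fz a b c d (r(k1:=0,k2:=1)) = 0"
      have "Fz a b c d (r(k2:=1,k1:=0)) = 0" for r using h eqr[of r] by metis
      thus ?thesis by blast
    qed
    thus False using pair_kill[OF that(1)] pair_kill[OF PRsym[OF that(1)]] nz by blast
  qed
  define s where "s i = dep (2*i) p" for i
  have depk: "dep k p = s (k div 2)" if "k < 8" for k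
  proof -
    have "k = 0 \<or> k = 1 \<or> k = 2 \<or> k = 3 \<or> k = 4 \<or> k = 5 \<or> k = 6 \<or> k = 7" using that by linarith
    hence "k = 2*(k div 2) \<or> (2*(k div 2), k) \<in> PR"
      by (elim disjE) (simp_all add: PR_def)
    thus ?thesis unfolding s_def using PRresp PRsym by metis
  qed
  have Rs: "Fe ((a+d)/2) ((a-d)/2) ((b+c)/2) ((b-c)/2) (msel s z1 z2) * Fe ((a+d)/2) ((a-d)/2) ((b+c)/2) ((b-c)/2) (msel s z1' z2')
     = Fe ((a+d)/2) ((a-d)/2) ((b+c)/2) ((b-c)/2) (msel s z1 z2') * Fe ((a+d)/2) ((a-d)/2) ((b+c)/2) ((b-c)/2) (msel s z1' z2)"
    for z1 z2 z1' z2'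
  proof -
    have mm: "Fz a b c d (m x y) = Fz a b c d (msel s x y)" for x y
      by (rule Fz_dep) (simp add: m_def msel_def depk)
    show ?thesis using R[of z1 z2 z1' z2'] unfolding mm unfolding Fz_Fe .
  qed
  have nall: "\<not> (s 0 \<and> s 1 \<and> s 2 \<and> s 3)"
  proof
    assume h: "s 0 \<and> s 1 \<and> s 2 \<and> s 3"
    obtain K where K: "K < 8" "dep K q" using hq by blast
    have "K div 2 < 4" using K by simp
    hence "K div 2 = 0 \<or> K div 2 = 1 \<or> K div 2 = 2 \<or> K div 2 = 3" by linarith
    hence "s (K div 2)" using h by (elim disjE) simp_all
    thus False using depk K disj by blast
  qed
  have nnone: "s 0 \<or> s 1 \<or> s 2 \<or> s 3"
  proof (rule ccontr)
    assume h: "\<not> (s 0 \<or> s 1 \<or> s 2 \<or> s 3)"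
    obtain K where K: "K < 8" "dep K p" using hp by blast
    have "K div 2 < 4" using K by simp
    hence "K div 2 = 0 \<or> K div 2 = 1 \<or> K div 2 = 2 \<or> K div 2 = 3" by linarith
    hence "\<not> s (K div 2)" using h by (elim disjE) simp_all
    thus False using depk K by blast
  qed
  have "Qe ((a+d)/2) ((a-d)/2) ((b+c)/2) ((b-c)/2)"
  proof (cases "s 0")
    case True
    show ?thesis by (rule final_cases_e[OF Rs True]) (use nall True in blast)
  next
    case False
    define s' where "s' i = (\<not> s i)" for i
    have ms: "msel s' x y = msel s y x" for x y by (auto simp: msel_def s'_def fun_eq_iff)
    show ?thesis
    proof (rule final_cases_e[where s=s'])
      show "s' 0" using False by (simp add: s'_def)
      show "\<not> (s' 1 \<and> s' 2 \<and> s' 3)" using nnone False by (simp add: s'_def)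
    next
      fix z1 z2 z1' z2'
      show "Fe ((a+d)/2) ((a-d)/2) ((b+c)/2) ((b-c)/2) (msel s' z1 z2) * Fe ((a+d)/2) ((a-d)/2) ((b+c)/2) ((b-c)/2) (msel s' z1' z2')
     = Fe ((a+d)/2) ((a-d)/2) ((b+c)/2) ((b-c)/2) (msel s' z1 z2') * Fe ((a+d)/2) ((a-d)/2) ((b+c)/2) ((b-c)/2) (msel s' z1' z2)"
        unfolding ms using Rs[of z2 z1 z2' z1'] by (simp add: mult_ac)
    qed
  qed
  thus ?thesis by (rule Qe_cond[OF _ nz])
qed


definition Wf :: "(nat \<Rightarrow> complex) \<Rightarrow> (nat \<Rightarrow> complex) \<Rightarrow> (nat \<Rightarrow> complex) \<Rightarrow> (nat \<Rightarrow> complex)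
   \<Rightarrow> (nat \<Rightarrow> nat) \<Rightarrow> (nat \<Rightarrow> complex) \<Rightarrow> nat \<Rightarrow> complex" where
  "Wf al be ga de sg z k = (if even k then al (k div 2) * z (2 * sg (k div 2)) + be (k div 2) * z (2 * sg (k div 2) + 1)
      else ga (k div 2) * z (2 * sg (k div 2)) + de (k div 2) * z (2 * sg (k div 2) + 1))"

lemma ev_Gs: "k < 8 \<Longrightarrow> sg (k div 2) < 4 \<Longrightarrow> ev z (Gamma_subst al be ga de sg k) = Wf al be ga de sg z k"
  unfolding Gamma_subst_def Wf_def Let_def by simp

lemma ev_h: "ev z (eval8 ((X 0 * X 1 - Y 0 * Y 1) * (X 2 * X 3 - Y 2 * Y 3)) s)
   = (ev z (s 0) * ev z (s 2) - ev z (s 1) * ev z (s 3)) * (ev z (s 4) * ev z (s 6) - ev z (s 5) * ev z (s 7))"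
  unfolding ev_eval8 by simp

lemma perm4: "(sg::nat\<Rightarrow>nat) permutes {0..<4} \<Longrightarrow> (k::nat) < 8 \<Longrightarrow> sg (k div 2) < 4"
  using permutes_in_image[of sg "{0..<4}" "k div 2"] by simp

lemma ev_orbit:
  assumes "sg permutes {0..<4}"
  shows "ev z (L8 lam * eval8 ((X 0 * X 1 - Y 0 * Y 1) * (X 2 * X 3 - Y 2 * Y 3)) (Gamma_subst al be ga de sg))
    = lam * ((Wf al be ga de sg z 0 * Wf al be ga de sg z 2 - Wf al be ga de sg z 1 * Wf al be ga de sg z 3)
           * (Wf al be ga de sg z 4 * Wf al be ga de sg z 6 - Wf al be ga de sg z 5 * Wf al be ga de sg z 7))"
  unfolding ev_mult ev_L8 ev_h
  using ev_Gs[of 0 sg z] ev_Gs[of 1 sg z] ev_Gs[of 2 sg z] ev_Gs[of 3 sg z] ev_Gs[of 4 sg z] ev_Gs[of 5 sg z]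
    ev_Gs[of 6 sg z] ev_Gs[of 7 sg z] perm4[OF assms, of 0] perm4[OF assms, of 1] perm4[OF assms, of 2]
    perm4[OF assms, of 3] perm4[OF assms, of 4] perm4[OF assms, of 5] perm4[OF assms, of 6] perm4[OF assms, of 7]
  by simp

lemma orbit_intro:
  assumes det: "\<alpha>*\<delta> - \<beta>*\<gamma> = 1" and sg: "sg permutes {0..<4}" and lam: "lam \<noteq> 0"
    and idt: "\<And>z. Fz a b c d z = lam * ((Wf (\<lambda>i. if i = 1 \<or> i = 3 then \<alpha> else 1) (\<lambda>i. if i = 1 \<or> i = 3 then \<beta> else 0)
         (\<lambda>i. if i = 1 \<or> i = 3 then \<gamma> else 0) (\<lambda>i. if i = 1 \<or> i = 3 then \<delta> else 1) sg z 0 *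
        Wf (\<lambda>i. if i = 1 \<or> i = 3 then \<alpha> else 1) (\<lambda>i. if i = 1 \<or> i = 3 then \<beta> else 0)
         (\<lambda>i. if i = 1 \<or> i = 3 then \<gamma> else 0) (\<lambda>i. if i = 1 \<or> i = 3 then \<delta> else 1) sg z 2 -
        Wf (\<lambda>i. if i = 1 \<or> i = 3 then \<alpha> else 1) (\<lambda>i. if i = 1 \<or> i = 3 then \<beta> else 0)
         (\<lambda>i. if i = 1 \<or> i = 3 then \<gamma> else 0) (\<lambda>i. if i = 1 \<or> i = 3 then \<delta> else 1) sg z 1 *
        Wf (\<lambda>i. if i = 1 \<or> i = 3 then \<alpha> else 1) (\<lambda>i. if i = 1 \<or> i = 3 then \<beta> else 0)
         (\<lambda>i. if i = 1 \<or> i = 3 then \<gamma> else 0) (\<lambda>i. if i = 1 \<or> i = 3 then \<delta> else 1) sg z 3) *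
       (Wf (\<lambda>i. if i = 1 \<or> i = 3 then \<alpha> else 1) (\<lambda>i. if i = 1 \<or> i = 3 then \<beta> else 0)
         (\<lambda>i. if i = 1 \<or> i = 3 then \<gamma> else 0) (\<lambda>i. if i = 1 \<or> i = 3 then \<delta> else 1) sg z 4 *
        Wf (\<lambda>i. if i = 1 \<or> i = 3 then \<alpha> else 1) (\<lambda>i. if i = 1 \<or> i = 3 then \<beta> else 0)
         (\<lambda>i. if i = 1 \<or> i = 3 then \<gamma> else 0) (\<lambda>i. if i = 1 \<or> i = 3 then \<delta> else 1) sg z 6 -
        Wf (\<lambda>i. if i = 1 \<or> i = 3 then \<alpha> else 1) (\<lambda>i. if i = 1 \<or> i = 3 then \<beta> else 0)
         (\<lambda>i. if i = 1 \<or> i = 3 then \<gamma> else 0) (\<lambda>i. if i = 1 \<or> i = 3 then \<delta> else 1) sg z 5 *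
        Wf (\<lambda>i. if i = 1 \<or> i = 3 then \<alpha> else 1) (\<lambda>i. if i = 1 \<or> i = 3 then \<beta> else 0)
         (\<lambda>i. if i = 1 \<or> i = 3 then \<gamma> else 0) (\<lambda>i. if i = 1 \<or> i = 3 then \<delta> else 1) sg z 7))"
  shows "in_Gamma_orbit_proj (G a b c d) ((X 0 * X 1 - Y 0 * Y 1) * (X 2 * X 3 - Y 2 * Y 3))"
  unfolding in_Gamma_orbit_proj_def
proof (intro exI conjI)
  show "in_Gamma (\<lambda>i. if i = 1 \<or> i = 3 then \<alpha> else 1) (\<lambda>i. if i = 1 \<or> i = 3 then \<beta> else 0)
         (\<lambda>i. if i = 1 \<or> i = 3 then \<gamma> else 0) (\<lambda>i. if i = 1 \<or> i = 3 then \<delta> else 1) sg"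
    unfolding in_Gamma_def using det sg by auto
  show "lam \<noteq> 0" by (rule lam)
  show "G a b c d = L8 lam * eval8 ((X 0 * X 1 - Y 0 * Y 1) * (X 2 * X 3 - Y 2 * Y 3))
     (Gamma_subst (\<lambda>i. if i = 1 \<or> i = 3 then \<alpha> else 1) (\<lambda>i. if i = 1 \<or> i = 3 then \<beta> else 0)
         (\<lambda>i. if i = 1 \<or> i = 3 then \<gamma> else 0) (\<lambda>i. if i = 1 \<or> i = 3 then \<delta> else 1) sg)"
    by (rule ev_inj) (simp only: ev_orbit[OF sg] ev_G idt)
qed

lemma orb0: "d \<noteq> 0 \<Longrightarrow> in_Gamma_orbit_proj (G 0 0 0 d) ((X 0 * X 1 - Y 0 * Y 1) * (X 2 * X 3 - Y 2 * Y 3))"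
  apply (rule orbit_intro[where \<alpha>="1" and \<beta>="0" and \<gamma>="0" and \<delta>="1" and sg="id" and lam="d/2"])
  apply (simp_all add: permutes_swap_id Wf_def Fz_def)
  apply (algebra | (insert i_squared, algebra))
  done

lemma orb1: "c \<noteq> 0 \<Longrightarrow> in_Gamma_orbit_proj (G 0 0 c 0) ((X 0 * X 1 - Y 0 * Y 1) * (X 2 * X 3 - Y 2 * Y 3))"
  apply (rule orbit_intro[where \<alpha>="0" and \<beta>="\<i>" and \<gamma>="\<i>" and \<delta>="0" and sg="id" and lam="-c/2"])
  apply (simp_all add: permutes_swap_id Wf_def Fz_def)
  apply (algebra | (insert i_squared, algebra))
  done

lemma orb2: "b \<noteq> 0 \<Longrightarrow> in_Gamma_orbit_proj (G 0 b 0 0) ((X 0 * X 1 - Y 0 * Y 1) * (X 2 * X 3 - Y 2 * Y 3))"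
  apply (rule orbit_intro[where \<alpha>="0" and \<beta>="1" and \<gamma>="-1" and \<delta>="0" and sg="id" and lam="b/2"])
  apply (simp_all add: permutes_swap_id Wf_def Fz_def)
  apply (algebra | (insert i_squared, algebra))
  done

lemma orb3: "a \<noteq> 0 \<Longrightarrow> in_Gamma_orbit_proj (G a 0 0 0) ((X 0 * X 1 - Y 0 * Y 1) * (X 2 * X 3 - Y 2 * Y 3))"
  apply (rule orbit_intro[where \<alpha>="\<i>" and \<beta>="0" and \<gamma>="0" and \<delta>="-\<i>" and sg="id" and lam="-a/2"])
  apply (simp_all add: permutes_swap_id Wf_def Fz_def)
  apply (algebra | (insert i_squared, algebra))
  done

lemma orb4: "a \<noteq> 0 \<Longrightarrow> in_Gamma_orbit_proj (G a a a a) ((X 0 * X 1 - Y 0 * Y 1) * (X 2 * X 3 - Y 2 * Y 3))"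
  apply (rule orbit_intro[where \<alpha>="\<i>" and \<beta>="0" and \<gamma>="0" and \<delta>="-\<i>" and sg="transpose 1 2" and lam="-a"])
  apply (simp_all add: permutes_swap_id Wf_def Fz_def)
  apply (algebra | (insert i_squared, algebra))
  done

lemma orb5: "a \<noteq> 0 \<Longrightarrow> in_Gamma_orbit_proj (G a a a (-a)) ((X 0 * X 1 - Y 0 * Y 1) * (X 2 * X 3 - Y 2 * Y 3))"
  apply (rule orbit_intro[where \<alpha>="0" and \<beta>="1" and \<gamma>="-1" and \<delta>="0" and sg="transpose 1 3" and lam="a"])
  apply (simp_all add: permutes_swap_id Wf_def Fz_def)
  apply (algebra | (insert i_squared, algebra))
  done

lemma orb6: "a \<noteq> 0 \<Longrightarrow> in_Gamma_orbit_proj (G a a (-a) a) ((X 0 * X 1 - Y 0 * Y 1) * (X 2 * X 3 - Y 2 * Y 3))"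
  apply (rule orbit_intro[where \<alpha>="\<i>" and \<beta>="0" and \<gamma>="0" and \<delta>="-\<i>" and sg="transpose 1 3" and lam="-a"])
  apply (simp_all add: permutes_swap_id Wf_def Fz_def)
  apply (algebra | (insert i_squared, algebra))
  done

lemma orb7: "a \<noteq> 0 \<Longrightarrow> in_Gamma_orbit_proj (G a a (-a) (-a)) ((X 0 * X 1 - Y 0 * Y 1) * (X 2 * X 3 - Y 2 * Y 3))"
  apply (rule orbit_intro[where \<alpha>="0" and \<beta>="1" and \<gamma>="-1" and \<delta>="0" and sg="transpose 1 2" and lam="a"])
  apply (simp_all add: permutes_swap_id Wf_def Fz_def)
  apply (algebra | (insert i_squared, algebra))
  done

lemma orb8: "a \<noteq> 0 \<Longrightarrow> in_Gamma_orbit_proj (G a (-a) a a) ((X 0 * X 1 - Y 0 * Y 1) * (X 2 * X 3 - Y 2 * Y 3))"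
  apply (rule orbit_intro[where \<alpha>="1" and \<beta>="0" and \<gamma>="0" and \<delta>="1" and sg="transpose 1 3" and lam="a"])
  apply (simp_all add: permutes_swap_id Wf_def Fz_def)
  apply (algebra | (insert i_squared, algebra))
  done

lemma orb9: "a \<noteq> 0 \<Longrightarrow> in_Gamma_orbit_proj (G a (-a) a (-a)) ((X 0 * X 1 - Y 0 * Y 1) * (X 2 * X 3 - Y 2 * Y 3))"
  apply (rule orbit_intro[where \<alpha>="0" and \<beta>="\<i>" and \<gamma>="\<i>" and \<delta>="0" and sg="transpose 1 2" and lam="-a"])
  apply (simp_all add: permutes_swap_id Wf_def Fz_def)
  apply (algebra | (insert i_squared, algebra))
  done

lemma orb10: "a \<noteq> 0 \<Longrightarrow> in_Gamma_orbit_proj (G a (-a) (-a) a) ((X 0 * X 1 - Y 0 * Y 1) * (X 2 * X 3 - Y 2 * Y 3))"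
  apply (rule orbit_intro[where \<alpha>="1" and \<beta>="0" and \<gamma>="0" and \<delta>="1" and sg="transpose 1 2" and lam="a"])
  apply (simp_all add: permutes_swap_id Wf_def Fz_def)
  apply (algebra | (insert i_squared, algebra))
  done

lemma orb11: "a \<noteq> 0 \<Longrightarrow> in_Gamma_orbit_proj (G a (-a) (-a) (-a)) ((X 0 * X 1 - Y 0 * Y 1) * (X 2 * X 3 - Y 2 * Y 3))"
  apply (rule orbit_intro[where \<alpha>="0" and \<beta>="\<i>" and \<gamma>="\<i>" and \<delta>="0" and sg="transpose 1 3" and lam="a"])
  apply (simp_all add: permutes_swap_id Wf_def Fz_def)
  apply (algebra | (insert i_squared, algebra))
  done



lemma unit_ev_const: "is_unit r \<Longrightarrow> ev z r = ev z' r"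
  by (rule indep[where S="{}" and f="\<lambda>z. ev z r"]) (auto intro: ev_dep unit_const)

lemma ev_h1: "ev z (eval8 (X 0 * X 1 - Y 0 * Y 1) s) = ev z (s 0) * ev z (s 2) - ev z (s 1) * ev z (s 3)"
  unfolding ev_eval8 by simp
lemma ev_h2: "ev z (eval8 (X 2 * X 3 - Y 2 * Y 3) s) = ev z (s 4) * ev z (s 6) - ev z (s 5) * ev z (s 7)"
  unfolding ev_eval8 by simp

lemma eval8_mult: "eval8 (p * q) s = eval8 p s * eval8 q s"
  unfolding eval8_ge using rh_mult[OF ge8_rh[OF rh_L8]] by blast

lemma factor_nonunit0:
  assumes sg: "sg permutes {0..<4}" and det: "\<forall>i<4. al i * de i - be i * ga i = 1"
    and lam: "lam \<noteq> 0"
  shows "\<not> is_unit (L8 lam * eval8 (X 0 * X 1 - Y 0 * Y 1) (Gamma_subst al be ga de sg))"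
proof
  let ?s = "Gamma_subst al be ga de sg"
  let ?u = "L8 lam * eval8 (X 0 * X 1 - Y 0 * Y 1) ?s"
  assume u: "is_unit ?u"
  have inj: "inj sg" using permutes_inj[OF sg] .
  have ne: "sg 0 \<noteq> sg 1" using inj by (auto dest: injD)
  have lt: "sg i < 4" if "i < 4" for i using permutes_in_image[OF sg, of i] that by simp
  define z where "z k = (if k div 2 = sg 0 then (if even k then de 0 else - ga 0)
      else if k div 2 = sg 1 then (if even k then de 1 else - ga 1) else 0)" for k
  have evu: "ev w ?u = lam * (Wf al be ga de sg w 0 * Wf al be ga de sg w 2 - Wf al be ga de sg w 1 * Wf al be ga de sg w 3)" for w
    unfolding ev_mult ev_L8 ev_eval8 using ev_Gs[of 0 sg w] ev_Gs[of 1 sg w] ev_Gs[of 2 sg w] ev_Gs[of 3 sg w] lt by simp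
  have d0: "al 0 * de 0 - be 0 * ga 0 = 1" "al 1 * de 1 - be 1 * ga 1 = 1" using det by auto
  have "ev z ?u = lam"
    unfolding evu using ne d0 by (simp add: Wf_def z_def algebra_simps)
  moreover have "ev (\<lambda>_. 0) ?u = 0" unfolding evu by (simp add: Wf_def)
  ultimately show False using unit_ev_const[OF u, of z "\<lambda>_. 0"] lam by simp
qed

lemma factor_nonunit1:
  assumes sg: "sg permutes {0..<4}" and det: "\<forall>i<4. al i * de i - be i * ga i = 1"
    and lam: "lam \<noteq> 0"
  shows "\<not> is_unit (L8 lam * eval8 (X 2 * X 3 - Y 2 * Y 3) (Gamma_subst al be ga de sg))"
proof
  let ?s = "Gamma_subst al be ga de sg"
  let ?u = "L8 lam * eval8 (X 2 * X 3 - Y 2 * Y 3) ?s"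
  assume u: "is_unit ?u"
  have inj: "inj sg" using permutes_inj[OF sg] .
  have ne: "sg 2 \<noteq> sg 3" using inj by (auto dest: injD)
  have lt: "sg i < 4" if "i < 4" for i using permutes_in_image[OF sg, of i] that by simp
  define z where "z k = (if k div 2 = sg 2 then (if even k then de 2 else - ga 2)
      else if k div 2 = sg 3 then (if even k then de 3 else - ga 3) else 0)" for k
  have evu: "ev w ?u = lam * (Wf al be ga de sg w 4 * Wf al be ga de sg w 6 - Wf al be ga de sg w 5 * Wf al be ga de sg w 7)" for w
    unfolding ev_mult ev_L8 ev_eval8 using ev_Gs[of 4 sg w] ev_Gs[of 5 sg w] ev_Gs[of 6 sg w] ev_Gs[of 7 sg w] lt by simp
  have d0: "al 2 * de 2 - be 2 * ga 2 = 1" "al 3 * de 3 - be 3 * ga 3 = 1" using det by auto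
  have "ev z ?u = lam"
    unfolding evu using ne d0 by (simp add: Wf_def z_def algebra_simps)
  moreover have "ev (\<lambda>_. 0) ?u = 0" unfolding evu by (simp add: Wf_def)
  ultimately show False using unit_ev_const[OF u, of z "\<lambda>_. 0"] lam by simp
qed



lemma orbit_red:
  assumes nz: "\<not> (a = 0 \<and> b = 0 \<and> c = 0 \<and> d = 0)"
    and orb: "in_Gamma_orbit_proj (G a b c d) ((X 0 * X 1 - Y 0 * Y 1) * (X 2 * X 3 - Y 2 * Y 3))"
  shows "reducible (G a b c d)"
proof -
  obtain al be ga de sg lam where ig: "in_Gamma al be ga de sg" and lam: "lam \<noteq> 0"
    and eq: "G a b c d = L8 lam * eval8 ((X 0 * X 1 - Y 0 * Y 1) * (X 2 * X 3 - Y 2 * Y 3)) (Gamma_subst al be ga de sg)"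
    using orb unfolding in_Gamma_orbit_proj_def by blast
  have sg: "sg permutes {0..<4}" and det: "\<forall>i<4. al i * de i - be i * ga i = 1"
    using ig unfolding in_Gamma_def by auto
  let ?s = "Gamma_subst al be ga de sg"
  have fac: "G a b c d = (L8 lam * eval8 (X 0 * X 1 - Y 0 * Y 1) ?s) * eval8 (X 2 * X 3 - Y 2 * Y 3) ?s"
    using eq eval8_mult by (simp add: mult.assoc)
  have nu1: "\<not> is_unit (L8 lam * eval8 (X 0 * X 1 - Y 0 * Y 1) ?s)" by (rule factor_nonunit0[OF sg det lam])
  have nu2: "\<not> is_unit (eval8 (X 2 * X 3 - Y 2 * Y 3) ?s)"
    using factor_nonunit1[OF sg det, of 1] rh_1[OF rh_L8] by simp
  obtain z0 where z0: "Fz a b c d z0 \<noteq> 0" using Fz_nonzero[OF nz] by blast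
  have nz0: "G a b c d \<noteq> 0" using z0 ev_G by (metis ev_0)
  have nunit: "\<not> is_unit (G a b c d)"
  proof
    assume "is_unit (G a b c d)"
    hence "ev z0 (G a b c d) = ev (\<lambda>_. 0) (G a b c d)" by (rule unit_ev_const)
    thus False using z0 by (simp add: ev_G Fz_def)
  qed
  have "\<not> irreducible (G a b c d)" using irreducibleD[OF _ fac] nu1 nu2 by blast
  thus ?thesis unfolding reducible_def using nz0 nunit by blast
qed

lemma red_cond2:
  assumes nz: "\<not> (a = 0 \<and> b = 0 \<and> c = 0 \<and> d = 0)" and r: "reducible (G a b c d)"
  shows "cond a b c d"
proof -
  from r have "\<not> irreducible (G a b c d)" "G a b c d \<noteq> 0" "\<not> is_unit (G a b c d)" unfolding reducible_def by auto
  then obtain p q where "G a b c d = p * q" "\<not> is_unit p" "\<not> is_unit q" unfolding irreducible_def by blast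
  thus ?thesis using red_cond[OF nz] by metis
qed

lemma cond_orbit:
  assumes nz: "\<not> (a = 0 \<and> b = 0 \<and> c = 0 \<and> d = 0)" and cd: "cond a b c d"
  shows "in_Gamma_orbit_proj (G a b c d) ((X 0 * X 1 - Y 0 * Y 1) * (X 2 * X 3 - Y 2 * Y 3))"
  using cd unfolding cond_def
proof (elim disjE conjE)
  assume h: "a^2 = b^2" "b^2 = c^2" "c^2 = d^2"
  have a0: "a \<noteq> 0"
  proof
    assume "a = 0"
    thus False using h nz by simp
  qed
  have hb: "b = a \<or> b = -a" using h power2_eq_iff by metis
  have hc: "c = a \<or> c = -a" using h power2_eq_iff by metis
  have hd: "d = a \<or> d = -a" using h power2_eq_iff by metis
  from hb hc hd show ?thesis
    by (elim disjE) (simp_all only: orb4[OF a0] orb5[OF a0] orb6[OF a0] orb7[OF a0] orb8[OF a0] orb9[OF a0] orb10[OF a0] orb11[OF a0])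
next
  assume "a = 0" "b = 0" "c = 0" thus ?thesis using nz orb0[of d] by simp
next
  assume "a = 0" "b = 0" "d = 0" thus ?thesis using nz orb1[of c] by simp
next
  assume "a = 0" "c = 0" "d = 0" thus ?thesis using nz orb2[of b] by simp
next
  assume "b = 0" "c = 0" "d = 0" thus ?thesis using nz orb3[of a] by simp
qed

theorem mainTheorem8:
  fixes a b c d :: complex
  assumes "\<not> (a = 0 \<and> b = 0 \<and> c = 0 \<and> d = 0)"
  shows "(reducible (G a b c d) \<longleftrightarrow>
           ((a^2 = b^2 \<and> b^2 = c^2 \<and> c^2 = d^2) \<or>
            (a = 0 \<and> b = 0 \<and> c = 0) \<or> (a = 0 \<and> b = 0 \<and> d = 0) \<or>
            (a = 0 \<and> c = 0 \<and> d = 0) \<or> (b = 0 \<and> c = 0 \<and> d = 0)))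
       \<and> (((a^2 = b^2 \<and> b^2 = c^2 \<and> c^2 = d^2) \<or>
            (a = 0 \<and> b = 0 \<and> c = 0) \<or> (a = 0 \<and> b = 0 \<and> d = 0) \<or>
            (a = 0 \<and> c = 0 \<and> d = 0) \<or> (b = 0 \<and> c = 0 \<and> d = 0))
          \<longleftrightarrow> in_Gamma_orbit_proj (G a b c d)
                 ((X 0 * X 1 - Y 0 * Y 1) * (X 2 * X 3 - Y 2 * Y 3)))"
  unfolding cond_def[symmetric]
  using red_cond2[OF assms] cond_orbit[OF assms] orbit_red[OF assms] by blast


end
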